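(* Let $\gamma_X=(X,d_X(\cdot))$ and $\gamma_Y=(Y,d_Y(\cdot))$ be any two dynamic metric spaces. For any $k\in\mathbf{Z}_+$, \[d_{\mathrm{I}}(\mathrm{rk}_k(\gamma_X),\mathrm{rk}_k(\gamma_Y))\le 2\cdot d_{\mathtt{dyn}}(\gamma_X,\gamma_Y).\]
   Context: A dynamic metric space (DMS) is a pair $\gamma_X=(X,d_X(\cdot))$ where $X$ is a nonempty finite set and $d_X(\cdot):\mathbf{R}\times X\times X\to\mathbf{R}_+$ satisfies: each $d_X(t)$ is a pseudometric, some $d_X(t_0)$ is a metric, and $t\mapsto d_X(t)(x,x')$ is continuous for all $x,x'$. For a closed interval $I$, $(\bigvee_I d_X)(x,x'):=\min_{s\in I}d_X(s)(x,x')$; $[t]^\varepsilon=[t-\varepsilon,t+\varepsilon]$. A tripod between $X$ and $Y$ is a set $Z$ with surjections $\varphi_X:Z\to X$, $\varphi_Y:Z\to Y$; it is an $\varepsilon$-tripod between $\gamma_X,\gamma_Y$ if for all $t\in\mathbf{R}$, $z,z'\in Z$: $(\bigvee_{[t]^\varepsilon}d_X)(\varphi_X(z),\varphi_X(z'))\le d_Y(t)(\varphi_Y(z),\varphi_Y(z'))+2\varepsilon$ and $(\bigvee_{[t]^\varepsilon}d_Y)(\varphi_Y(z),\varphi_Y(z'))\le d_X(t)(\varphi_X(z),\varphi_X(z'))+2\varepsilon$. $d_{\mathtt{dyn}}(\gamma_X,\gamma_Y)$ is the minimum over tripods of the infimum of $\varepsilon$ for which the tripod is an $\varepsilon$-tripod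 ($\infty$ if none). For symmetric $d$ vanishing on the diagonal, $\mathcal{R}_\delta(X,d)$ is the simplicial complex on $X$ with simplices the nonempty $\sigma$ with $d(x,x')\le\delta$ for all $x,x'\in\sigma$; $\mathrm{H}_k$ is simplicial homology over a fixed field. $\mathbf{R}^6_\times$ is $\mathbf{R}^6$ with $\mathbf{a}\le\mathbf{b}$ iff $a_1\le b_1$, $a_2\ge b_2$, $a_3\ge b_3$, $a_4\ge b_4$, $a_5\le b_5$, $a_6\le b_6$. $\mathbf{a}$ is admissible if $a_1\le a_2$, $a_4\le a_5$, $a_3,a_6\ge0$, $[a_1,a_2]\subseteq[a_4,a_5]$, $a_3\le a_6$; trivially non-admissible if no admissible $\mathbf{b}<\mathbf{a}$ in $\mathbf{R}^6_\times$ exists. $\mathrm{rk}_k(\gamma_X):\mathbf{R}^6\to\mathbf{Z}_+\cup\{\infty\}$ is the rank of $\mathrm{H}_k(\mathcal{R}_{a_3}(X,\bigvee_{[a_1,a_2]}d_X)\hookrightarrow\mathcal{R}_{a_6}(X,\bigvee_{[a_4,a_5]}d_X))$ for admissible $\mathbf{a}$, $\infty$ for trivially non-admissible $\mathbf{a}$, and $0$ otherwise; it is order-reversing on $\mathbf{R}^6_\times$. For order-reversing $F,G:\mathbf{R}^6_\times\to\mathbf{Z}_+\cup\{\infty\}$ and $\varepsilon\ge0$, let $\mathbf{a}+\vec\varepsilon:=(a_1+\varepsilon,a_2-\varepsilon,a_3-\varepsilon,a_4-\varepsilon,a_5+\varepsilon,a_6+\varepsilon)$ (the shift upward by $\varepsilon$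 in every coordinate of $\mathbf{R}^6_\times$). Then $d_{\mathrm{I}}(F,G):=\inf\{\varepsilon\ge0:\forall\mathbf{a},\ F(\mathbf{a})\ge G(\mathbf{a}+\vec\varepsilon)\text{ and }G(\mathbf{a})\ge F(\mathbf{a}+\vec\varepsilon)\}$. *)

theory Defs
  imports "HOL-Analysis.Analysis" "HOL-Library.Function_Algebras" "HOL-Library.Extended_Nat"
begin

definition is_pseudometric_on :: "'a set \<Rightarrow> ('a \<Rightarrow> 'a \<Rightarrow> real) \<Rightarrow> bool" where
  "is_pseudometric_on X d \<longleftrightarrow>
     (\<forall>x\<in>X. \<forall>y\<in>X. d x y \<ge> 0) \<and> (\<forall>x\<in>X. d x x = 0) \<and>
     (\<forall>x\<in>X. \<forall>y\<in>X. d x y = d y x) \<and>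
     (\<forall>x\<in>X. \<forall>y\<in>X. \<forall>z\<in>X. d x z \<le> d x y + d y z)"

definition is_metric_on :: "'a set \<Rightarrow> ('a \<Rightarrow> 'a \<Rightarrow> real) \<Rightarrow> bool" where
  "is_metric_on X d \<longleftrightarrow> is_pseudometric_on X d \<and> (\<forall>x\<in>X. \<forall>y\<in>X. d x y = 0 \<longrightarrow> x = y)"

definition is_DMS :: "'a set \<Rightarrow> (real \<Rightarrow> 'a \<Rightarrow> 'a \<Rightarrow> real) \<Rightarrow> bool" where
  "is_DMS X d \<longleftrightarrow> finite X \<and> X \<noteq> {} \<and>
     (\<forall>t. is_pseudometric_on X (d t)) \<and>
     (\<exists>t0. is_metric_on X (d t0)) \<and>
     (\<forall>x\<in>X. \<forall>y\<in>X. continuous_on UNIV (\<lambda>t. d t x y))"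

definition vee :: "(real \<Rightarrow> 'a \<Rightarrow> 'a \<Rightarrow> real) \<Rightarrow> real \<Rightarrow> real \<Rightarrow> 'a \<Rightarrow> 'a \<Rightarrow> real" where
  "vee d a b x y = Inf ((\<lambda>s. d s x y) ` {a..b})"

definition eps_tripod ::
  "'a set \<Rightarrow> (real \<Rightarrow> 'a \<Rightarrow> 'a \<Rightarrow> real) \<Rightarrow> 'b set \<Rightarrow> (real \<Rightarrow> 'b \<Rightarrow> 'b \<Rightarrow> real)
    \<Rightarrow> 'z set \<Rightarrow> ('z \<Rightarrow> 'a) \<Rightarrow> ('z \<Rightarrow> 'b) \<Rightarrow> real \<Rightarrow> bool" where
  "eps_tripod X dX Y dY Z phiX phiY \<epsilon> \<longleftrightarrow>
     phiX ` Z = X \<and> phiY ` Z = Y \<and>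
     (\<forall>t. \<forall>z\<in>Z. \<forall>z'\<in>Z.
        vee dX (t - \<epsilon>) (t + \<epsilon>) (phiX z) (phiX z') \<le> dY t (phiY z) (phiY z') + 2 * \<epsilon> \<and>
        vee dY (t - \<epsilon>) (t + \<epsilon>) (phiY z) (phiY z') \<le> dX t (phiX z) (phiX z') + 2 * \<epsilon>)"

text \<open>Tripods are taken with Z a subset of X \<times> Y (every tripod between finite
  sets factors through its image in X \<times> Y, with the same \<epsilon>-tripod property).
  d_dyn is the infimum over all tripods and admissible \<epsilon>; \<infinity> if there are none.\<close>
definition d_dyn ::
  "'a set \<Rightarrow> (real \<Rightarrow> 'a \<Rightarrow> 'a \<Rightarrow> real) \<Rightarrow> 'b set \<Rightarrow> (real \<Rightarrow> 'b \<Rightarrow> 'b \<Rightarrow> real) \<Rightarrow> ereal" where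
  "d_dyn X dX Y dY = Inf {ereal \<epsilon> | \<epsilon> (Z :: ('a \<times> 'b) set) phiX phiY.
      \<epsilon> \<ge> 0 \<and> eps_tripod X dX Y dY Z phiX phiY \<epsilon>}"

definition rips :: "'a set \<Rightarrow> ('a \<Rightarrow> 'a \<Rightarrow> real) \<Rightarrow> real \<Rightarrow> 'a set set" where
  "rips X d \<delta> = {\<sigma>. \<sigma> \<noteq> {} \<and> \<sigma> \<subseteq> X \<and> (\<forall>x\<in>\<sigma>. \<forall>x'\<in>\<sigma>. d x x' \<le> \<delta>)}"

text \<open>Simplicial k-chains of a complex K with coefficients in a field 'f: functions on
  k-simplices (sets of card k+1, oriented by the linear order of the vertices).\<close>
definition chains :: "'a set set \<Rightarrow> nat \<Rightarrow> ('a set \<Rightarrow> 'f::field) set" where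
  "chains K k = {c. \<forall>\<sigma>. c \<sigma> \<noteq> 0 \<longrightarrow> \<sigma> \<in> K \<and> finite \<sigma> \<and> card \<sigma> = k + 1}"

definition bdry :: "'a::linorder set set \<Rightarrow> nat \<Rightarrow> ('a set \<Rightarrow> 'f::field) \<Rightarrow> ('a set \<Rightarrow> 'f)" where
  "bdry L k c = (\<lambda>\<tau>. if finite \<tau> \<and> card \<tau> = k then
      (\<Sum>\<sigma>\<in>{\<sigma>\<in>L. finite \<sigma> \<and> card \<sigma> = k + 1 \<and> \<tau> \<subset> \<sigma>}.
         (-1) ^ card {w\<in>\<tau>. w < the_elem (\<sigma> - \<tau>)} * c \<sigma>)
    else 0)"

definition cycles :: "'a::linorder set set \<Rightarrow> nat \<Rightarrow> ('a set \<Rightarrow> 'f::field) set" where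
  "cycles K k = {c \<in> chains K k. k = 0 \<or> bdry K k c = 0}"

definition boundaries :: "'a::linorder set set \<Rightarrow> nat \<Rightarrow> ('a set \<Rightarrow> 'f::field) set" where
  "boundaries L k = {bdry L (k + 1) c | c. c \<in> chains L (k + 1)}"

definition fscale :: "'f::field \<Rightarrow> ('a set \<Rightarrow> 'f) \<Rightarrow> ('a set \<Rightarrow> 'f)" where
  "fscale a c = (\<lambda>\<sigma>. a * c \<sigma>)"

text \<open>Rank of H_k(K) \<rightarrow> H_k(L) induced by inclusion K \<subseteq> L:
  dim((Z_k(K) + B_k(L)) / B_k(L)) = dim(Z_k(K) + B_k(L)) - dim(B_k(L)).\<close>
definition hom_rank :: "'f::field itself \<Rightarrow> 'a::linorder set set \<Rightarrow> 'a set set \<Rightarrow> nat \<Rightarrow> nat" where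
  "hom_rank _ K L k =
     vector_space.dim (fscale :: 'f \<Rightarrow> _) {z + b | z b. z \<in> (cycles K k :: ('a set \<Rightarrow> 'f) set) \<and> b \<in> boundaries L k}
     - vector_space.dim (fscale :: 'f \<Rightarrow> _) (boundaries L k :: ('a set \<Rightarrow> 'f) set)"

record pt6 =
  c1 :: real  c2 :: real  c3 :: real  c4 :: real  c5 :: real  c6 :: real

definition le6 :: "pt6 \<Rightarrow> pt6 \<Rightarrow> bool" where
  "le6 a b \<longleftrightarrow> c1 a \<le> c1 b \<and> c2 a \<ge> c2 b \<and> c3 a \<ge> c3 b \<and> c4 a \<ge> c4 b \<and>
               c5 a \<le> c5 b \<and> c6 a \<le> c6 b"

definition admissible :: "pt6 \<Rightarrow> bool" where
  "admissible a \<longleftrightarrow> c1 a \<le> c2 a \<and> c4 a \<le> c5 a \<and> c3 a \<ge> 0 \<and> c6 a \<ge> 0 \<and>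
      {c1 a..c2 a} \<subseteq> {c4 a..c5 a} \<and> c3 a \<le> c6 a"

definition triv_nonadmissible :: "pt6 \<Rightarrow> bool" where
  "triv_nonadmissible a \<longleftrightarrow> \<not> (\<exists>b. admissible b \<and> le6 b a \<and> b \<noteq> a)"

definition rk :: "'f::field itself \<Rightarrow> nat \<Rightarrow> 'a::linorder set \<Rightarrow> (real \<Rightarrow> 'a \<Rightarrow> 'a \<Rightarrow> real) \<Rightarrow> pt6 \<Rightarrow> enat" where
  "rk F k X d a =
     (if admissible a then
        enat (hom_rank F (rips X (vee d (c1 a) (c2 a)) (c3 a))
                         (rips X (vee d (c4 a) (c5 a)) (c6 a)) k)
      else if triv_nonadmissible a then \<infinity> else 0)"

definition shift6 :: "pt6 \<Rightarrow> real \<Rightarrow> pt6" where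
  "shift6 a \<epsilon> = \<lparr>c1 = c1 a + \<epsilon>, c2 = c2 a - \<epsilon>, c3 = c3 a - \<epsilon>,
                   c4 = c4 a - \<epsilon>, c5 = c5 a + \<epsilon>, c6 = c6 a + \<epsilon>\<rparr>"

definition interleaving_dist :: "(pt6 \<Rightarrow> enat) \<Rightarrow> (pt6 \<Rightarrow> enat) \<Rightarrow> ereal" where
  "interleaving_dist F G = Inf {ereal \<epsilon> | \<epsilon>. \<epsilon> \<ge> 0 \<and>
      (\<forall>a. F a \<ge> G (shift6 a \<epsilon>) \<and> G a \<ge> F (shift6 a \<epsilon>))}"

end

theory Submission
  imports Defs
begin

fun ninv :: "'a::linorder list \<Rightarrow> nat" where
  "ninv [] = 0"
| "ninv (x#xs) = length (filter (\<lambda>y. y < x) xs) + ninv xs"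

lemma ninv_del: "ninv (us @ v # ws) = ninv (us @ ws) + length (filter (\<lambda>u. v < u) us) + length (filter (\<lambda>w. w < v) ws)"
  by (induction us) auto

lemma filter_lt_gt: "(x::'a::linorder) \<notin> set bs \<Longrightarrow> length (filter (\<lambda>u. x < u) bs) + length (filter (\<lambda>u. u < x) bs) = length bs"
  by (induction bs) auto

lemma neg1_eq: "a + 2*l = b + 2*m \<Longrightarrow> ((-1::'f::comm_ring_1)^a) = (-1)^b"
proof -
  assume "a + 2*l = b + 2*m"
  hence "((-1::'f)^(a+2*l)) = (-1)^(b+2*m)" by simp
  thus ?thesis by (simp add: power_add power_mult)
qed

definition orient :: "'a::linorder list \<Rightarrow> 'a set \<Rightarrow> 'f::field" where
  "orient xs = (\<lambda>\<sigma>. if distinct xs \<and> \<sigma> = set xs then (-1)^ninv xs else 0)"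

fun bd :: "('c list \<Rightarrow> 'v::ab_group_add) \<Rightarrow> 'c list \<Rightarrow> 'v" where
  "bd T [] = 0"
| "bd T (y#ys) = T ys - bd (\<lambda>zs. T (y#zs)) ys"

definition alt :: "nat \<Rightarrow> 'v::ab_group_add \<Rightarrow> 'v" where "alt m x = (if even m then x else - x)"

definition dl :: "nat \<Rightarrow> 'c list \<Rightarrow> 'c list" where "dl m xs = take m xs @ drop (Suc m) xs"

lemma alt_Suc: "alt (Suc m) x = - alt m x" by (simp add: alt_def)
lemma alt_0[simp]: "alt 0 x = x" by (simp add: alt_def)
lemma alt_apply: "alt m f x = alt m (f x)" by (simp add: alt_def)
lemma alt_field: "alt m (c::'f::comm_ring_1) = (-1)^m * c" by (simp add: alt_def)

lemma dl_Cons0[simp]: "dl 0 (x#xs) = xs" by (simp add: dl_def)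
lemma dl_ConsS[simp]: "dl (Suc m) (x#xs) = x # dl m xs" by (simp add: dl_def)
lemma dl_append: "dl m (us @ vs) = (if m < length us then dl m us @ vs else us @ dl (m - length us) vs)"
  by (auto simp: dl_def Suc_diff_le)

lemma bd_sum: "bd T xs = (\<Sum>m<length xs. alt m (T (dl m xs)))"
proof (induction xs arbitrary: T)
  case Nil then show ?case by simp
next
  case (Cons y ys)
  show ?case
    by (simp only: bd.simps Cons.IH length_Cons sum.lessThan_Suc_shift alt_Suc dl_Cons0 dl_ConsS
        sum_negf alt_0) simp
qed

lemma dl_set_distinct: "distinct xs \<Longrightarrow> m < length xs \<Longrightarrow> set (dl m xs) = set xs - {xs!m} \<and> distinct (dl m xs)"
proof -
  assume d: "distinct xs" and m: "m < length xs"
  have xs: "xs = take m xs @ xs!m # drop (Suc m) xs" using m by (simp add: id_take_nth_drop)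
  have "distinct (take m xs @ xs!m # drop (Suc m) xs)" using d xs by metis
  thus ?thesis unfolding dl_def by (subst (3) xs) auto
qed

lemma bd_orient_nondistinct:
  assumes "\<not> distinct xs"
  shows "bd orient xs = (0 :: 'a::linorder set \<Rightarrow> 'f::field)"
proof -
  obtain as x bs cs where xs: "xs = as @ x # bs @ x # cs" using not_distinct_decomp[OF assms] by fastforce
  define p where "p = length as"
  define q where "q = length as + 1 + length bs"
  define A where "A = as @ bs @ x # cs"
  define B where "B = as @ x # bs @ cs"
  have pq: "p < length xs" "q < length xs" "p \<noteq> q" using xs by (auto simp: p_def q_def)
  have dlp: "dl p xs = A" unfolding xs A_def p_def by (simp add: dl_append)
  have dlq: "dl q xs = B" unfolding xs B_def q_def by (simp add: dl_append)
  have zero: "orient (dl m xs) = (0 :: 'a set \<Rightarrow> 'f)" if "m < length xs" "m \<noteq> p" "m \<noteq> q" for m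
  proof -
    have "\<not> distinct (dl m xs)"
    proof (cases "m < p")
      case True then show ?thesis unfolding xs p_def by (simp add: dl_append)
    next
      case False
      then show ?thesis
      proof (cases "m < q")
        case True
        then obtain j where j: "m = Suc (length as + j)" "j < length bs"
          using \<open>\<not> m < p\<close> \<open>m \<noteq> p\<close> unfolding p_def q_def
          by (intro that[of "m - Suc (length as)"]) auto
        have "dl m xs = as @ x # dl j bs @ x # cs" unfolding xs j(1) using j(2) by (simp add: dl_append)
        then show ?thesis by simp
      next
        case False
        then obtain j where j: "m = Suc (Suc (length as + length bs + j))"
          using \<open>m \<noteq> q\<close> unfolding q_def
          by (intro that[of "m - Suc (Suc (length as + length bs))"]) auto
        have "dl m xs = as @ x # bs @ x # dl j cs" unfolding xs j(1) by (simp add: dl_append)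
        then show ?thesis by simp
      qed
    qed
    thus ?thesis unfolding orient_def by (simp add: fun_eq_iff)
  qed
  have "bd orient xs = (\<Sum>m<length xs. alt m (orient (dl m xs) :: 'a set \<Rightarrow> 'f))" by (rule bd_sum)
  also have "\<dots> = (\<Sum>m\<in>{p,q}. alt m (orient (dl m xs)))"
    by (rule sum.mono_neutral_right) (use pq zero in \<open>auto simp: alt_def\<close>)
  also have "\<dots> = alt p (orient A) + alt q (orient B)" using pq dlp dlq by simp
  also have "\<dots> = 0"
  proof (rule ext)
    fix \<sigma>
    have dAB: "distinct A = distinct B" "set A = set B" unfolding A_def B_def by auto
    show "(alt p (orient A) + alt q (orient B)) \<sigma> = (0 :: 'a set \<Rightarrow> 'f) \<sigma>"
    proof (cases "distinct A \<and> \<sigma> = set A")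
      case False then show ?thesis using dAB by (auto simp add: alt_apply orient_def alt_def)
    next
      case True
      hence xb: "x \<notin> set bs" unfolding A_def by auto
      have nA: "ninv A = ninv (as @ bs @ cs) + length (filter (\<lambda>u. x < u) (as @ bs)) + length (filter (\<lambda>w. w < x) cs)"
        unfolding A_def using ninv_del[of "as @ bs" x cs] by simp
      have nB: "ninv B = ninv (as @ bs @ cs) + length (filter (\<lambda>u. x < u) as) + length (filter (\<lambda>w. w < x) (bs @ cs))"
        unfolding B_def using ninv_del[of "as" x "bs @ cs"] by simp
      have lg: "length (filter (\<lambda>u. x < u) bs) + length (filter (\<lambda>u. u < x) bs) = length bs"
        using filter_lt_gt[OF xb] .
      have "p + ninv A + 2 * (length (filter (\<lambda>u. u < x) bs) + 1) = Suc q + ninv B + 2 * 0"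
        using nA nB lg unfolding p_def q_def by simp
      hence "((-1::'f)^(p + ninv A)) = (-1)^(Suc q + ninv B)" by (rule neg1_eq)
      hence "((-1::'f)^p * (-1)^ninv A) + (-1)^q * (-1)^ninv B = 0" by (simp add: power_add)
      then show ?thesis using True dAB by (simp add: alt_apply orient_def del: power_minus1_even) (simp add: alt_field)
    qed
  qed
  finally show ?thesis .
qed

lemma sum_fun_apply: "(sum f A) x = (\<Sum>a\<in>A. f a x)"
  by (induction A rule: infinite_finite_induct) auto

lemma bdry_zero: "bdry L k (0 :: 'a::linorder set \<Rightarrow> 'f::field) = 0"
  by (simp add: bdry_def fun_eq_iff)

lemma distinct_filter_card: "distinct xs \<Longrightarrow> length (filter P xs) = card {w \<in> set xs. P w}"
  by (metis distinct_filter distinct_card set_filter)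

lemma bdry_orient_distinct:
  fixes xs :: "'a::linorder list"
  assumes L: "finite L" and len: "length xs = Suc k" and d: "distinct xs" and xL: "set xs \<in> L"
  shows "bdry L k (orient xs) = (bd orient xs :: 'a set \<Rightarrow> 'f::field)"
proof (rule ext)
  fix \<tau> :: "'a set"
  have cardxs: "card (set xs) = Suc k" using d len by (simp add: distinct_card)
  have bdv: "bd orient xs \<tau> = (\<Sum>m<length xs. alt m (orient (dl m xs) \<tau> :: 'f))"
    by (simp add: bd_sum alt_apply sum_fun_apply)
  show "bdry L k (orient xs) \<tau> = (bd orient xs :: 'a set \<Rightarrow> 'f) \<tau>"
  proof (cases "\<exists>m0 < length xs. \<tau> = set xs - {xs!m0}")
    case True
    then obtain m0 where m0: "m0 < length xs" "\<tau> = set xs - {xs!m0}" by blast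
    define v where "v = xs!m0"
    define us where "us = take m0 xs"
    define ws where "ws = drop (Suc m0) xs"
    have xsd: "xs = us @ v # ws" unfolding us_def ws_def v_def using m0 by (simp add: id_take_nth_drop)
    have dlm0: "dl m0 xs = us @ ws" unfolding dl_def us_def ws_def ..
    have lus: "length us = m0" unfolding us_def using m0 by simp
    have dxs: "distinct (us @ v # ws)" using d xsd by simp
    have "set xs - {v} = set (us @ ws)" using dxs by (subst xsd) auto
    hence tau: "\<tau> = set (us @ ws)" using m0(2) v_def by simp
    have dus: "distinct (us @ ws)" using dxs by auto
    have "card \<tau> = length (us @ ws)" unfolding tau by (rule distinct_card[OF dus])
    hence ftau: "finite \<tau>" "card \<tau> = k" using tau len xsd by auto
    have "bd orient xs \<tau> = alt m0 (orient (dl m0 xs) \<tau> :: 'f)"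
    proof -
      have "(\<Sum>m<length xs. alt m (orient (dl m xs) \<tau> :: 'f)) = (\<Sum>m\<in>{m0}. alt m (orient (dl m xs) \<tau>))"
      proof (rule sum.mono_neutral_right)
        show "\<forall>i\<in>{..<length xs} - {m0}. alt i (orient (dl i xs) \<tau> :: 'f) = 0"
        proof
          fix i assume i: "i \<in> {..<length xs} - {m0}"
          have "set (dl i xs) = set xs - {xs!i}" using dl_set_distinct[OF d] i by auto
          moreover have "xs!i \<noteq> xs!m0" using i m0 d by (auto simp: nth_eq_iff_index_eq)
          moreover have "xs!i \<in> set xs" "xs!m0 \<in> set xs" using i m0 by auto
          ultimately have "\<tau> \<noteq> set (dl i xs)" using m0(2) by auto
          thus "alt i (orient (dl i xs) \<tau> :: 'f) = 0" by (simp add: orient_def alt_def)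
        qed
      qed (use m0 in auto)
      thus ?thesis using bdv by simp
    qed
    also have "\<dots> = (-1)^m0 * (-1)^ninv (us @ ws)"
      using dlm0 tau dxs by (simp add: orient_def alt_field)
    finally have R: "bd orient xs \<tau> = ((-1)^m0 * (-1)^ninv (us @ ws) :: 'f)" .
    let ?S = "{\<sigma> \<in> L. finite \<sigma> \<and> card \<sigma> = k + 1 \<and> \<tau> \<subset> \<sigma>}"
    let ?g = "\<lambda>\<sigma>. (-1::'f) ^ card {w\<in>\<tau>. w < the_elem (\<sigma> - \<tau>)} * orient xs \<sigma>"
    have vin: "v \<in> set xs" using m0 v_def by simp
    have "\<tau> \<subset> set xs" using m0(2) vin v_def by blast
    hence setxs: "set xs \<in> ?S" using xL cardxs by simp
    have "bdry L k (orient xs) \<tau> = sum ?g ?S" using ftau by (simp add: bdry_def)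
    also have "\<dots> = sum ?g {set xs}"
    proof (rule sum.mono_neutral_right)
      show "finite ?S" using L by simp
      show "{set xs} \<subseteq> ?S" using setxs by simp
      show "\<forall>i\<in>?S - {set xs}. ?g i = 0" by (simp add: orient_def)
    qed
    also have "\<dots> = (-1) ^ card {w\<in>\<tau>. w < v} * (-1)^ninv xs"
    proof -
      have "set xs - \<tau> = {v}" using tau xsd dxs by auto
      thus ?thesis using d by (simp add: orient_def)
    qed
    also have "\<dots> = (-1)^m0 * (-1)^ninv (us @ ws)"
    proof -
      have c: "card {w\<in>\<tau>. w < v} = length (filter (\<lambda>w. w < v) (us @ ws))"
        unfolding tau by (rule distinct_filter_card[OF dus, symmetric])
      have n: "ninv xs = ninv (us @ ws) + length (filter (\<lambda>u. v < u) us) + length (filter (\<lambda>w. w < v) ws)"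
        using xsd ninv_del by metis
      have g: "length (filter (\<lambda>u. v < u) us) + length (filter (\<lambda>u. u < v) us) = m0"
        using filter_lt_gt[of v us] dxs lus by simp
      have "card {w\<in>\<tau>. w < v} + ninv xs + 2 * 0 = m0 + ninv (us @ ws) + 2 * length (filter (\<lambda>w. w < v) ws)"
        using c n g by simp
      hence "((-1::'f) ^ (card {w\<in>\<tau>. w < v} + ninv xs)) = (-1) ^ (m0 + ninv (us @ ws))" by (rule neg1_eq)
      thus ?thesis by (simp add: power_add)
    qed
    finally show ?thesis using R by simp
  next
    case False
    have R: "bd orient xs \<tau> = (0::'f)"
    proof -
      have "alt m (orient (dl m xs) \<tau> :: 'f) = 0" if "m < length xs" for m
      proof -
        have "set (dl m xs) = set xs - {xs!m}" using dl_set_distinct[OF d that] by auto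
        thus ?thesis using False that by (auto simp: orient_def alt_def)
      qed
      thus ?thesis using bdv by simp
    qed
    have "bdry L k (orient xs) \<tau> = (0::'f)"
    proof (cases "finite \<tau> \<and> card \<tau> = k")
      case False then show ?thesis by (auto simp add: bdry_def)
    next
      case True
      have "(-1::'f) ^ card {w\<in>\<tau>. w < the_elem (\<sigma> - \<tau>)} * orient xs \<sigma> = 0"
        if "\<sigma> \<in> L" "finite \<sigma>" "card \<sigma> = k + 1" "\<tau> \<subset> \<sigma>" for \<sigma>
      proof (cases "\<sigma> = set xs")
        case True
        have "card (\<sigma> - \<tau>) = 1" using \<open>finite \<tau> \<and> card \<tau> = k\<close> that
          by (simp add: card_Diff_subset psubset_imp_subset)
        then obtain v where v: "\<sigma> - \<tau> = {v}" by (meson card_1_singletonE)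
        have "\<tau> = \<sigma> - {v}" "v \<in> \<sigma>" using v that(4) by blast+
        hence "\<tau> = set xs - {v}" "v \<in> set xs" using True by simp_all
        then obtain m where "m < length xs" "xs!m = v" by (meson in_set_conv_nth)
        then have False using \<open>\<not> (\<exists>m0<length xs. \<tau> = set xs - {xs ! m0})\<close> \<open>\<tau> = set xs - {v}\<close> by blast
        thus ?thesis ..
      qed (simp add: orient_def)
      then show ?thesis using True by (simp add: bdry_def)
    qed
    thus ?thesis using R by simp
  qed
qed

lemma bdry_orient:
  fixes xs :: "'a::linorder list"
  assumes L: "finite L" and len: "length xs = Suc k" and xL: "distinct xs \<Longrightarrow> set xs \<in> L"
  shows "bdry L k (orient xs) = (bd orient xs :: 'a set \<Rightarrow> 'f::field)"
proof (cases "distinct xs")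
  case True then show ?thesis using bdry_orient_distinct assms by blast
next
  case False
  hence "orient xs = (0 :: 'a set \<Rightarrow> 'f)" by (simp add: orient_def fun_eq_iff)
  then show ?thesis using bd_orient_nondistinct[OF False] by (simp add: bdry_zero)
qed

fun pr :: "('c \<Rightarrow> 'd) \<Rightarrow> ('c \<Rightarrow> 'd) \<Rightarrow> ('d list \<Rightarrow> 'v::ab_group_add) \<Rightarrow> 'c list \<Rightarrow> 'v" where
  "pr f g T [] = 0"
| "pr f g T (x#xs) = T (f x # g x # map g xs) - pr f g (\<lambda>zs. T (f x # zs)) xs"

lemma bd_diff: "bd (\<lambda>zs. A zs - B zs) xs = bd A xs - bd B xs"
  by (induction xs arbitrary: A B) (auto simp: algebra_simps)

lemma pr_diff: "pr f g (\<lambda>zs. A zs - B zs) xs = pr f g A xs - pr f g B xs"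
  by (induction xs arbitrary: A B) (auto simp: algebra_simps)

lemma bd_map: "bd T (map g xs) = bd (\<lambda>zs. T (map g zs)) xs"
  by (induction xs arbitrary: T) auto

lemma prism: "xs \<noteq> [] \<Longrightarrow> pr f g (bd T) xs + bd (pr f g T) xs = T (map g xs) - T (map f xs)"
proof (induction xs arbitrary: T)
  case Nil then show ?case by simp
next
  case (Cons x xs)
  show ?case
  proof (cases "xs = []")
    case True then show ?thesis by simp
  next
    case False
    let ?T = "\<lambda>zs. T (f x # zs)"
    have IH: "pr f g (bd ?T) xs + bd (pr f g ?T) xs = ?T (map g xs) - ?T (map f xs)"
      using Cons.IH[OF False] .
    have e1: "pr f g (bd T) (x # xs) = bd T (f x # g x # map g xs) - (pr f g T xs - pr f g (bd ?T) xs)"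
      using pr_diff[of f g T "bd ?T" xs] by simp
    have e2: "bd (pr f g T) (x # xs) = pr f g T xs - (bd (\<lambda>zs. T (f x # g x # map g zs)) xs - bd (pr f g ?T) xs)"
      using bd_diff[of "\<lambda>zs. T (f x # g x # map g zs)" "pr f g ?T" xs] by simp
    have e3: "bd T (f x # g x # map g xs) = T (g x # map g xs) - (T (f x # map g xs) - bd (\<lambda>zs. T (f x # g x # map g zs)) xs)"
      by (simp add: bd_map)
    show ?thesis using IH e1 e2 e3 by (simp add: algebra_simps)
  qed
qed

definition lc :: "'i set \<Rightarrow> ('i \<Rightarrow> 'f) \<Rightarrow> ('i \<Rightarrow> 'x \<Rightarrow> 'f::field) \<Rightarrow> 'x \<Rightarrow> 'f" where
  "lc I a e = (\<lambda>\<tau>. \<Sum>i\<in>I. a i * e i \<tau>)"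

definition opr :: "('y \<Rightarrow> 'x set) \<Rightarrow> ('y \<Rightarrow> 'x \<Rightarrow> 'f) \<Rightarrow> ('x \<Rightarrow> 'f::field) \<Rightarrow> 'y \<Rightarrow> 'f" where
  "opr S w c = (\<lambda>\<tau>. \<Sum>\<sigma>\<in>S \<tau>. w \<tau> \<sigma> * c \<sigma>)"

lemma opr_lc: "opr S w (lc I a e) = lc I a (\<lambda>i. opr S w (e i))"
  unfolding opr_def lc_def
  by (rule ext) (simp add: sum_distrib_left sum_distrib_right mult.left_commute mult.assoc sum.swap[of _ "S _"])

lemma opr_diff: "opr S w (x - y) = opr S w x - opr S w y"
  unfolding opr_def by (rule ext) (simp add: right_diff_distrib sum_subtractf)

lemma opr_zero: "opr S w 0 = 0"
  unfolding opr_def by (rule ext) simp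

lemma lc_cong: assumes "\<And>i. i \<in> I \<Longrightarrow> a i \<noteq> 0 \<Longrightarrow> e i = e' i" shows "lc I a e = lc I a e'"
  unfolding lc_def
proof (intro ext sum.cong refl)
  fix \<tau> x assume "x \<in> I"
  then show "a x * e x \<tau> = a x * e' x \<tau>" using assms by (cases "a x = 0") auto
qed

lemma lc_add: "lc I a e + lc I a e' = lc I a (\<lambda>i. e i + e' i)"
  unfolding lc_def by (rule ext) (simp add: distrib_left sum.distrib)

lemma lc_diff: "lc I a e - lc I a e' = lc I a (\<lambda>i. e i - e' i)"
  unfolding lc_def by (rule ext) (simp add: right_diff_distrib sum_subtractf)

lemma bdry_opr: "bdry L k = opr (\<lambda>\<tau>. {\<sigma>\<in>L. finite \<sigma> \<and> card \<sigma> = k + 1 \<and> \<tau> \<subset> \<sigma>})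
   (\<lambda>\<tau> \<sigma>. if finite \<tau> \<and> card \<tau> = k then (-1)^card {w\<in>\<tau>. w < the_elem (\<sigma> - \<tau>)} else 0)"
  unfolding opr_def bdry_def by (intro ext) auto

lemma bd_additive: assumes "\<And>a b. M (a - b) = M a - M b"
  shows "M (bd T xs) = bd (\<lambda>zs. M (T zs)) xs"
proof -
  have M0: "M 0 = 0" using assms[of 0 0] by simp
  show ?thesis by (induction xs arbitrary: T) (simp_all add: M0 assms)
qed

lemma pr_additive: assumes "\<And>a b. M (a - b) = M a - M b"
  shows "M (pr f g T xs) = pr f g (\<lambda>zs. M (T zs)) xs"
proof -
  have M0: "M 0 = 0" using assms[of 0 0] by simp
  show ?thesis by (induction xs arbitrary: T) (simp_all add: M0 assms)
qed

lemma ninv_sorted: "sorted xs \<Longrightarrow> ninv xs = 0"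
  by (induction xs) (auto simp: filter_empty_conv not_less)

lemma sl_set: "sorted xs \<Longrightarrow> distinct xs \<Longrightarrow> sorted_list_of_set (set xs) = xs"
  by (simp add: sorted_list_of_set_sort_remdups sorted_sort_id)

lemma orient_sl: "finite \<sigma> \<Longrightarrow> orient (sorted_list_of_set \<sigma>) = (\<lambda>\<tau>. if \<tau> = \<sigma> then (1::'f::field) else 0)"
  by (rule ext) (simp add: orient_def ninv_sorted)

lemma expand: assumes "\<And>\<sigma>. c \<sigma> \<noteq> 0 \<Longrightarrow> \<sigma> \<in> K" "finite K" "\<And>\<sigma>. \<sigma> \<in> K \<Longrightarrow> finite \<sigma>"
  shows "c = lc K c (\<lambda>\<sigma>. orient (sorted_list_of_set \<sigma>))"
proof (rule ext)
  fix \<tau>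
  have "lc K c (\<lambda>\<sigma>. orient (sorted_list_of_set \<sigma>)) \<tau> = (\<Sum>\<sigma>\<in>K. if \<sigma> = \<tau> then c \<sigma> else 0)"
    unfolding lc_def using assms(3) by (intro sum.cong) (auto simp: orient_sl)
  also have "\<dots> = (if \<tau> \<in> K then c \<tau> else 0)"
    using assms(2) by (simp add: sum.delta)
  also have "\<dots> = c \<tau>" using assms(1) by auto
  finally show "c \<tau> = lc K c (\<lambda>\<sigma>. orient (sorted_list_of_set \<sigma>)) \<tau>" by simp
qed

lemma parity_aux:
  fixes G N Gz Nz L LG lu lw gu gw gtu ggu m :: nat
  assumes "even (G + N + Gz + Nz)" "L = lu + lw" "LG = gu + gw" "gtu + lu = m" "ggu + gu = m"
  shows "even ((LG + G) + (L + N) + (Gz + ggu + gw) + (Nz + gtu + lw))"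
  using assms by presburger

lemma perm_parity:
  fixes g :: "'b::linorder \<Rightarrow> 'a::linorder"
  assumes "distinct ys" "distinct zs" "set ys = set zs" "inj_on g (set ys)"
  shows "even (ninv (map g ys) + ninv ys + ninv (map g zs) + ninv zs)"
  using assms
proof (induction ys arbitrary: zs)
  case Nil then show ?case by simp
next
  case (Cons y ys zs)
  have "y \<in> set zs" using Cons.prems by auto
  then obtain us ws where zs: "zs = us @ y # ws" by (meson split_list)
  define zs' where "zs' = us @ ws"
  have dz': "distinct zs'" "y \<notin> set us" "y \<notin> set ws" using Cons.prems(2) zs zs'_def by auto
  have sy: "set ys = set zs'" using Cons.prems zs zs'_def by auto
  have dys: "distinct ys" "y \<notin> set ys" using Cons.prems by auto
  have inj: "inj_on g (set ys)" using Cons.prems(4) by (auto intro: inj_on_subset)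
  have IH: "even (ninv (map g ys) + ninv ys + ninv (map g zs') + ninv zs')"
    using Cons.IH[OF dys(1) dz'(1) sy inj] .
  have injz: "inj_on g (set zs)" using Cons.prems by simp
  have gy: "g y \<notin> set (map g us)" using injz zs dz' by (auto simp: inj_on_def)
  have dgys: "distinct (map g ys)" "distinct (map g zs')" using inj sy dys dz' by (auto simp: distinct_map)
  have sgy: "set (map g ys) = set (map g zs')" using sy by simp
  have l1: "length (filter (\<lambda>w. w < y) ys) = length (filter (\<lambda>w. w < y) us) + length (filter (\<lambda>w. w < y) ws)"
  proof -
    have "length (filter (\<lambda>w. w < y) ys) = length (filter (\<lambda>w. w < y) zs')"
      using distinct_filter_card[OF dys(1)] distinct_filter_card[OF dz'(1)] sy by simp
    thus ?thesis unfolding zs'_def by simp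
  qed
  have l2: "length (filter (\<lambda>w. w < g y) (map g ys)) = length (filter (\<lambda>w. w < g y) (map g us)) + length (filter (\<lambda>w. w < g y) (map g ws))"
  proof -
    have "length (filter (\<lambda>w. w < g y) (map g ys)) = length (filter (\<lambda>w. w < g y) (map g zs'))"
      using distinct_filter_card[OF dgys(1)] distinct_filter_card[OF dgys(2)] sgy by metis
    thus ?thesis unfolding zs'_def by simp
  qed
  have l3: "length (filter (\<lambda>u. y < u) us) + length (filter (\<lambda>u. u < y) us) = length us"
    using filter_lt_gt[OF dz'(2)] .
  have l4: "length (filter (\<lambda>u. g y < u) (map g us)) + length (filter (\<lambda>u. u < g y) (map g us)) = length us"
    using filter_lt_gt[OF gy] by simp
  have n1: "ninv zs = ninv zs' + length (filter (\<lambda>u. y < u) us) + length (filter (\<lambda>w. w < y) ws)"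
    unfolding zs zs'_def by (rule ninv_del)
  have n2: "ninv (map g zs) = ninv (map g zs') + length (filter (\<lambda>u. g y < u) (map g us)) + length (filter (\<lambda>w. w < g y) (map g ws))"
    unfolding zs zs'_def using ninv_del[of "map g us" "g y" "map g ws"] by simp
  have e1: "ninv (y#ys) = length (filter (\<lambda>w. w<y) ys) + ninv ys" by (simp only: ninv.simps)
  have e2: "ninv (map g (y#ys)) = length (filter (\<lambda>w. w < g y) (map g ys)) + ninv (map g ys)"
    by (simp only: list.map ninv.simps)
  show ?case by (simp only: e1 e2 n1 n2) (rule parity_aux[OF IH l1 l2 l3 l4])
qed

lemma perm_sign:
  fixes g :: "'b::linorder \<Rightarrow> 'a::linorder"
  assumes "distinct ys" "distinct zs" "set ys = set zs" "inj_on g (set ys)"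
  shows "((-1::'f::field) ^ (ninv ys + ninv (map g ys))) = (-1) ^ (ninv zs + ninv (map g zs))"
proof -
  obtain t where t: "ninv (map g ys) + ninv ys + ninv (map g zs) + ninv zs = 2 * t"
    using perm_parity[OF assms] by (metis evenE)
  have "(ninv ys + ninv (map g ys)) + 2 * (ninv zs + ninv (map g zs)) = (ninv zs + ninv (map g zs)) + 2 * t"
    using t by simp
  thus ?thesis by (rule neg1_eq)
qed

definition cmap :: "'b::linorder set \<Rightarrow> ('b \<Rightarrow> 'a::linorder) \<Rightarrow> ('b set \<Rightarrow> 'f) \<Rightarrow> ('a set \<Rightarrow> 'f::field)" where
  "cmap V g = opr (\<lambda>_. Pow V) (\<lambda>\<tau> \<sigma>. orient (map g (sorted_list_of_set \<sigma>)) \<tau>)"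

lemma cmap_orient:
  fixes g :: "'b::linorder \<Rightarrow> 'a::linorder" and ys :: "'b list"
  assumes V: "finite V" and ys: "set ys \<subseteq> V"
  shows "cmap V g (orient ys) = (orient (map g ys) :: 'a set \<Rightarrow> 'f::field)"
proof (cases "distinct ys")
  case False
  hence "orient ys = (0 :: 'b set \<Rightarrow> 'f)" "orient (map g ys) = (0 :: 'a set \<Rightarrow> 'f)"
    by (auto simp: orient_def fun_eq_iff distinct_map)
  then show ?thesis by (simp add: cmap_def opr_zero)
next
  case True
  define zs where "zs = sorted_list_of_set (set ys)"
  have zs: "distinct zs" "set zs = set ys" "sorted zs" unfolding zs_def by auto
  show ?thesis
  proof (rule ext)
    fix \<tau>
    have "cmap V g (orient ys) \<tau> = (\<Sum>\<sigma>\<in>Pow V. orient (map g (sorted_list_of_set \<sigma>)) \<tau> * (orient ys \<sigma> :: 'f))"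
      by (simp add: cmap_def opr_def)
    also have "\<dots> = (\<Sum>\<sigma>\<in>Pow V. if \<sigma> = set ys then orient (map g zs) \<tau> * (-1)^ninv ys else 0)"
      by (rule sum.cong) (auto simp: orient_def True zs_def)
    also have "\<dots> = orient (map g zs) \<tau> * (-1)^ninv ys"
      using V ys by (simp add: sum.delta)
    also have "\<dots> = orient (map g ys) \<tau>"
    proof (cases "inj_on g (set ys)")
      case False
      then show ?thesis using zs by (simp add: orient_def distinct_map)
    next
      case inj: True
      have "((-1::'f) ^ (ninv ys + ninv (map g ys))) = (-1) ^ (ninv zs + ninv (map g zs))"
        using perm_sign[OF True zs(1) zs(2)[symmetric] inj] .
      hence pa: "((-1::'f) ^ ninv ys * (-1) ^ ninv (map g ys)) = (-1) ^ ninv (map g zs)"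
        using zs(3) by (simp add: power_add ninv_sorted)
      have sq: "((-1::'f)^ninv ys) * (-1)^ninv ys = 1"
        by (simp add: power_mult_distrib[symmetric])
      have e: "((-1::'f) ^ ninv (map g zs) * (-1) ^ ninv ys) = (-1) ^ ninv (map g ys)"
      proof -
        have "((-1::'f) ^ ninv (map g zs) * (-1) ^ ninv ys) = ((-1) ^ ninv ys * (-1) ^ ninv (map g ys)) * (-1) ^ ninv ys"
          using pa by simp
        also have "\<dots> = (-1) ^ ninv (map g ys) * ((-1::'f)^ninv ys * (-1)^ninv ys)" by (simp only: ac_simps)
        also have "\<dots> = (-1) ^ ninv (map g ys)" using sq by simp
        finally show ?thesis .
      qed
      show ?thesis using zs inj True e by (simp add: orient_def distinct_map)
    qed
    finally show "cmap V g (orient ys) \<tau> = (orient (map g ys) \<tau> :: 'f)" .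
  qed
qed

lemma cmap_lc: "cmap V g (lc I a e) = lc I a (\<lambda>i. cmap V g (e i))"
  by (simp add: cmap_def opr_lc)
lemma cmap_diff: "cmap V g (x - y) = cmap V g x - cmap V g y"
  by (simp add: cmap_def opr_diff)
lemma bdry_lc: "bdry L k (lc I a e) = lc I a (\<lambda>i. bdry L k (e i))"
  by (simp add: bdry_opr opr_lc)
lemma bdry_diff: "bdry L k (x - y) = bdry L k x - bdry L k y"
  by (simp add: bdry_opr opr_diff)

lemma sorted_dl: "sorted xs \<Longrightarrow> sorted (dl m xs)"
proof -
  assume s: "sorted xs"
  have "sorted (take m xs @ drop m xs)" by (simp only: append_take_drop_id s)
  hence "sorted (take m xs) \<and> sorted (drop m xs) \<and> (\<forall>x\<in>set (take m xs). \<forall>y\<in>set (drop m xs). x \<le> y)"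
    unfolding sorted_append .
  hence a: "sorted (take m xs)" "\<forall>x\<in>set (take m xs). \<forall>y\<in>set (drop m xs). x \<le> y" by blast+
  have "set (drop (Suc m) xs) \<subseteq> set (drop m xs)" by (simp add: set_drop_subset_set_drop)
  moreover have "sorted (drop (Suc m) xs)" using s by (simp add: sorted_wrt_drop)
  ultimately show ?thesis using a unfolding dl_def by (auto simp: sorted_append)
qed

lemma distinct_dl: "distinct xs \<Longrightarrow> distinct (dl m xs)"
proof -
  assume s: "distinct xs"
  have "distinct (take m xs @ drop m xs)" by (simp only: append_take_drop_id s)
  hence a: "distinct (take m xs)" "set (take m xs) \<inter> set (drop m xs) = {}"
    by (simp_all only: distinct_append)
  have "set (drop (Suc m) xs) \<subseteq> set (drop m xs)" by (simp add: set_drop_subset_set_drop)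
  moreover have "distinct (drop (Suc m) xs)" using s by simp
  ultimately show ?thesis using a unfolding dl_def by auto
qed

lemma set_dl: "set (dl m xs) \<subseteq> set xs"
  unfolding dl_def using set_take_subset set_drop_subset by fastforce

lemma chains_expand:
  assumes "c \<in> chains K k" "K \<subseteq> Pow V" "finite V"
  shows "c = lc K c (\<lambda>\<sigma>. orient (sorted_list_of_set \<sigma>))"
proof (rule expand)
  show "c \<sigma> \<noteq> 0 \<Longrightarrow> \<sigma> \<in> K" for \<sigma> using assms(1) by (auto simp: chains_def)
  show "finite K" using assms(2,3) by (meson finite_Pow_iff finite_subset)
  show "\<sigma> \<in> K \<Longrightarrow> finite \<sigma>" for \<sigma> using assms(2,3) by (auto intro: finite_subset)
qed

lemma cmap_bdry:
  fixes g :: "'b::linorder \<Rightarrow> 'a::linorder" and c :: "'b set \<Rightarrow> 'f::field"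
  assumes V: "finite V" and K: "K \<subseteq> Pow V" and L: "finite L"
    and simpl: "\<And>\<sigma>. \<sigma> \<in> K \<Longrightarrow> g ` \<sigma> \<in> L" and c: "c \<in> chains K k"
  shows "bdry L k (cmap V g c) = cmap V g (bdry K k c)"
proof -
  have fK: "finite K" using K V by (meson finite_Pow_iff finite_subset)
  have ce: "c = lc K c (\<lambda>\<sigma>. orient (sorted_list_of_set \<sigma>))" by (rule chains_expand[OF c K V])
  have "bdry L k (cmap V g c) = lc K c (\<lambda>\<sigma>. bdry L k (cmap V g (orient (sorted_list_of_set \<sigma>))))"
    by (subst ce) (simp add: cmap_lc bdry_lc)
  also have "\<dots> = lc K c (\<lambda>\<sigma>. cmap V g (bdry K k (orient (sorted_list_of_set \<sigma>))))"
  proof (rule lc_cong)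
    fix \<sigma> assume \<sigma>: "\<sigma> \<in> K" "c \<sigma> \<noteq> 0"
    define xs where "xs = sorted_list_of_set \<sigma>"
    have fs: "finite \<sigma>" "\<sigma> \<subseteq> V" using \<sigma> K V by (auto intro: finite_subset)
    have cs: "card \<sigma> = Suc k" using \<sigma> c by (auto simp: chains_def)
    have xs: "length xs = Suc k" "set xs = \<sigma>" "sorted xs" "distinct xs" using fs cs by (auto simp: xs_def)
    have co: "cmap V g (orient xs) = (orient (map g xs) :: 'a set \<Rightarrow> 'f)"
      by (rule cmap_orient[OF V]) (simp only: xs fs)
    have "bdry L k (cmap V g (orient xs)) = bdry L k (orient (map g xs) :: 'a set \<Rightarrow> 'f)"
      by (simp only: co)
    also have "\<dots> = bd orient (map g xs)"
      by (rule bdry_orient[OF L]) (use xs simpl[OF \<sigma>(1)] in auto)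
    also have "\<dots> = bd (\<lambda>zs. orient (map g zs)) xs" by (rule bd_map)
    also have "\<dots> = bd (\<lambda>zs. cmap V g (orient zs)) xs"
      unfolding bd_sum
    proof (rule sum.cong[OF refl])
      fix m assume "m \<in> {..<length xs}"
      have "set (dl m xs) \<subseteq> V" using set_dl[of m xs] fs(2) unfolding xs(2) by (rule order_trans)
      thus "alt m (orient (map g (dl m xs))) = alt m (cmap V g (orient (dl m xs)) :: 'a set \<Rightarrow> 'f)"
        by (simp only: cmap_orient[OF V])
    qed
    also have "\<dots> = cmap V g (bd orient xs)"
      by (rule bd_additive[of "cmap V g", symmetric]) (rule cmap_diff)
    also have "\<dots> = cmap V g (bdry K k (orient xs))"
      by (subst bdry_orient[OF fK]) (use xs \<sigma> in auto)
    finally show "bdry L k (cmap V g (orient (sorted_list_of_set \<sigma>) :: 'b set \<Rightarrow> 'f)) = cmap V g (bdry K k (orient (sorted_list_of_set \<sigma>)))"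
      unfolding xs_def .
  qed
  also have "\<dots> = cmap V g (bdry K k c)"
    by (subst (2) ce) (simp add: cmap_lc bdry_lc)
  finally show ?thesis .
qed

lemma cmap_comp:
  fixes f :: "'b::linorder \<Rightarrow> 'a::linorder" and g :: "'a \<Rightarrow> 'c::linorder" and c :: "'b set \<Rightarrow> 'f::field"
  assumes V: "finite V" and W: "finite W" "f ` V \<subseteq> W" and c: "\<And>\<sigma>. c \<sigma> \<noteq> 0 \<Longrightarrow> \<sigma> \<subseteq> V"
  shows "cmap W g (cmap V f c) = cmap V (g \<circ> f) c"
proof -
  have ce: "c = lc (Pow V) c (\<lambda>\<sigma>. orient (sorted_list_of_set \<sigma>))"
    by (rule expand) (use c V in \<open>auto intro: finite_subset\<close>)
  have "cmap W g (cmap V f c) = lc (Pow V) c (\<lambda>\<sigma>. cmap W g (cmap V f (orient (sorted_list_of_set \<sigma>))))"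
    by (subst ce) (simp add: cmap_lc)
  also have "\<dots> = lc (Pow V) c (\<lambda>\<sigma>. cmap V (g \<circ> f) (orient (sorted_list_of_set \<sigma>)))"
  proof (rule lc_cong)
    fix \<sigma> assume \<sigma>: "\<sigma> \<in> Pow V"
    have fs: "finite \<sigma>" "\<sigma> \<subseteq> V" using \<sigma> V by (auto intro: finite_subset)
    have "set (map f (sorted_list_of_set \<sigma>)) \<subseteq> W" using fs W by auto
    thus "cmap W g (cmap V f (orient (sorted_list_of_set \<sigma>))) = cmap V (g \<circ> f) (orient (sorted_list_of_set \<sigma>))"
      using fs by (simp add: cmap_orient[OF V] cmap_orient[OF W(1)])
  qed
  also have "\<dots> = cmap V (g \<circ> f) c"
    by (subst (2) ce) (simp add: cmap_lc)
  finally show ?thesis .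
qed

lemma cmap_id:
  fixes c :: "'b::linorder set \<Rightarrow> 'f::field"
  assumes V: "finite V" and c: "\<And>\<sigma>. c \<sigma> \<noteq> 0 \<Longrightarrow> \<sigma> \<subseteq> V"
  shows "cmap V id c = c"
proof -
  have ce: "c = lc (Pow V) c (\<lambda>\<sigma>. orient (sorted_list_of_set \<sigma>))"
    by (rule expand) (use c V in \<open>auto intro: finite_subset\<close>)
  have "cmap V id c = lc (Pow V) c (\<lambda>\<sigma>. cmap V id (orient (sorted_list_of_set \<sigma>)))"
    by (subst ce) (simp add: cmap_lc)
  also have "\<dots> = lc (Pow V) c (\<lambda>\<sigma>. orient (sorted_list_of_set \<sigma>))"
  proof (rule lc_cong)
    fix \<sigma> assume \<sigma>: "\<sigma> \<in> Pow V"
    have fs: "finite \<sigma>" "\<sigma> \<subseteq> V" using \<sigma> V by (auto intro: finite_subset)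
    thus "cmap V id (orient (sorted_list_of_set \<sigma>)) = (orient (sorted_list_of_set \<sigma>) :: 'b set \<Rightarrow> 'f)"
      by (simp add: cmap_orient[OF V])
  qed
  also have "\<dots> = c" using ce by simp
  finally show ?thesis .
qed

lemma cmap_chains:
  fixes g :: "'b::linorder \<Rightarrow> 'a::linorder" and c :: "'b set \<Rightarrow> 'f::field"
  assumes V: "finite V" and K: "K \<subseteq> Pow V" and simpl: "\<And>\<sigma>. \<sigma> \<in> K \<Longrightarrow> g ` \<sigma> \<in> L" and c: "c \<in> chains K k"
  shows "cmap V g c \<in> chains L k"
  unfolding chains_def
proof (intro CollectI allI impI)
  fix \<tau> assume ne: "cmap V g c \<tau> \<noteq> 0"
  have "cmap V g c \<tau> = (\<Sum>\<sigma>\<in>Pow V. orient (map g (sorted_list_of_set \<sigma>)) \<tau> * c \<sigma>)"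
    by (simp add: cmap_def opr_def)
  hence "(\<Sum>\<sigma>\<in>Pow V. orient (map g (sorted_list_of_set \<sigma>)) \<tau> * c \<sigma>) \<noteq> 0" using ne by simp
  then obtain \<sigma> where \<sigma>: "\<sigma> \<in> Pow V" "orient (map g (sorted_list_of_set \<sigma>)) \<tau> * c \<sigma> \<noteq> 0"
    by (rule sum.not_neutral_contains_not_neutral)
  hence cs: "c \<sigma> \<noteq> 0" "orient (map g (sorted_list_of_set \<sigma>)) \<tau> \<noteq> (0::'f)" by auto
  hence sK: "\<sigma> \<in> K" "card \<sigma> = k + 1" "finite \<sigma>" using c by (auto simp: chains_def)
  have d: "distinct (map g (sorted_list_of_set \<sigma>))" "\<tau> = set (map g (sorted_list_of_set \<sigma>))"
    using cs(2) by (auto simp: orient_def split: if_splits)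
  have ss: "set (sorted_list_of_set \<sigma>) = \<sigma>" "length (sorted_list_of_set \<sigma>) = card \<sigma>" using sK(3) by simp_all
  have "\<tau> = g ` \<sigma>" unfolding d(2) by (simp only: set_map ss)
  moreover have "card \<tau> = k + 1" unfolding d(2) using distinct_card[OF d(1)] ss sK(2) by simp
  ultimately show "\<tau> \<in> L \<and> finite \<tau> \<and> card \<tau> = k + 1" using simpl[OF sK(1)] sK by simp
qed

definition hom :: "'b::linorder set \<Rightarrow> ('b \<Rightarrow> 'a::linorder) \<Rightarrow> ('b \<Rightarrow> 'a) \<Rightarrow> ('b set \<Rightarrow> 'f) \<Rightarrow> ('a set \<Rightarrow> 'f::field)" where
  "hom V f g = opr (\<lambda>_. Pow V) (\<lambda>\<tau> \<sigma>. pr f g orient (sorted_list_of_set \<sigma>) \<tau>)"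

lemma hom_lc: "hom V f g (lc I a e) = lc I a (\<lambda>i. hom V f g (e i))"
  by (simp add: hom_def opr_lc)
lemma hom_diff: "hom V f g (x - y) = hom V f g x - hom V f g y"
  by (simp add: hom_def opr_diff)

lemma opr_delta: assumes "finite V" "S \<subseteq> V"
  shows "opr (\<lambda>_. Pow V) w (orient (sorted_list_of_set S)) = (\<lambda>\<tau>. w \<tau> S)"
proof (rule ext)
  fix \<tau>
  have fS: "finite S" using assms by (auto intro: finite_subset)
  have "opr (\<lambda>_. Pow V) w (orient (sorted_list_of_set S)) \<tau> = (\<Sum>\<sigma>\<in>Pow V. if \<sigma> = S then w \<tau> \<sigma> else 0)"
    unfolding opr_def using fS by (intro sum.cong) (auto simp: orient_sl)
  also have "\<dots> = w \<tau> S" using assms by (simp add: sum.delta)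
  finally show "opr (\<lambda>_. Pow V) w (orient (sorted_list_of_set S)) \<tau> = w \<tau> S" .
qed

lemma hom_sorted:
  assumes V: "finite V" and zs: "sorted zs" "distinct zs" "set zs \<subseteq> V"
  shows "hom V f g (orient zs) = (pr f g orient zs :: 'a::linorder set \<Rightarrow> 'f::field)"
proof -
  have "orient zs = (orient (sorted_list_of_set (set zs)) :: 'b set \<Rightarrow> 'f)" using zs by (simp add: sl_set)
  hence "hom V f g (orient zs) = (hom V f g (orient (sorted_list_of_set (set zs))) :: 'a set \<Rightarrow> 'f)" by simp
  also have "\<dots> = (\<lambda>\<tau>. pr f g orient (sorted_list_of_set (set zs)) \<tau>)"
    unfolding hom_def by (rule opr_delta[OF V zs(3)])
  also have "\<dots> = pr f g orient zs" using zs by (simp add: sl_set)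
  finally show ?thesis .
qed

lemma pr_cong:
  assumes "\<And>zs. length zs = Suc (length xs) \<Longrightarrow> set zs \<subseteq> f ` set xs \<union> g ` set xs \<Longrightarrow> T zs = T' zs"
  shows "pr f g T xs = pr f g T' xs"
  using assms
proof (induction xs arbitrary: T T')
  case Nil then show ?case by simp
next
  case (Cons x xs)
  have a: "T (f x # g x # map g xs) = T' (f x # g x # map g xs)"
    by (rule Cons.prems) auto
  have b: "pr f g (\<lambda>zs. T (f x # zs)) xs = pr f g (\<lambda>zs. T' (f x # zs)) xs"
    by (rule Cons.IH) (rule Cons.prems, auto)
  show ?case using a b by simp
qed

lemma pr_zero:
  assumes "\<And>zs. length zs = Suc (length xs) \<Longrightarrow> set zs \<subseteq> f ` set xs \<union> g ` set xs \<Longrightarrow> T zs \<tau> = 0"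
  shows "pr f g T xs \<tau> = 0"
  using assms
proof (induction xs arbitrary: T)
  case Nil then show ?case by simp
next
  case (Cons x xs)
  have a: "T (f x # g x # map g xs) \<tau> = 0"
    by (rule Cons.prems) auto
  have b: "pr f g (\<lambda>zs. T (f x # zs)) xs \<tau> = 0"
    by (rule Cons.IH) (rule Cons.prems, auto)
  show ?case using a b by simp
qed

lemma homotopy:
  fixes f g :: "'b::linorder \<Rightarrow> 'a::linorder" and c :: "'b set \<Rightarrow> 'f::field"
  assumes V: "finite V" and K: "K \<subseteq> Pow V" and L: "finite L"
    and contig: "\<And>\<sigma> \<tau>. \<sigma> \<in> K \<Longrightarrow> \<tau> \<noteq> {} \<Longrightarrow> \<tau> \<subseteq> f ` \<sigma> \<union> g ` \<sigma> \<Longrightarrow> \<tau> \<in> L"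
    and c: "c \<in> chains K k"
  shows "bdry L (k+1) (hom V f g c) + hom V f g (bdry K k c) = cmap V g c - cmap V f c"
proof -
  have fK: "finite K" using K V by (meson finite_Pow_iff finite_subset)
  have ce: "c = lc K c (\<lambda>\<sigma>. orient (sorted_list_of_set \<sigma>))" by (rule chains_expand[OF c K V])
  have "bdry L (k+1) (hom V f g c) + hom V f g (bdry K k c)
      = lc K c (\<lambda>\<sigma>. bdry L (k+1) (hom V f g (orient (sorted_list_of_set \<sigma>))) + hom V f g (bdry K k (orient (sorted_list_of_set \<sigma>))))"
    by (subst (1 2) ce) (simp add: hom_lc bdry_lc lc_add)
  also have "\<dots> = lc K c (\<lambda>\<sigma>. cmap V g (orient (sorted_list_of_set \<sigma>)) - cmap V f (orient (sorted_list_of_set \<sigma>)))"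
  proof (rule lc_cong)
    fix \<sigma> assume \<sigma>: "\<sigma> \<in> K" "c \<sigma> \<noteq> 0"
    define xs where "xs = sorted_list_of_set \<sigma>"
    have fs: "finite \<sigma>" "\<sigma> \<subseteq> V" using \<sigma> K V by (auto intro: finite_subset)
    have cs: "card \<sigma> = Suc k" using \<sigma> c by (auto simp: chains_def)
    have xs: "length xs = Suc k" "set xs = \<sigma>" "sorted xs" "distinct xs" using fs cs by (auto simp: xs_def)
    have xsV: "set xs \<subseteq> V" using xs fs by simp
    have h1: "bdry L (k+1) (hom V f g (orient xs)) = (pr f g (bd orient) xs :: 'a set \<Rightarrow> 'f)"
    proof -
      have "bdry L (k+1) (hom V f g (orient xs)) = bdry L (k+1) (pr f g orient xs :: 'a set \<Rightarrow> 'f)"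
        by (simp only: hom_sorted[OF V xs(3) xs(4) xsV])
      also have "\<dots> = pr f g (\<lambda>zs. bdry L (k+1) (orient zs)) xs"
        by (rule pr_additive[of "bdry L (k+1)"]) (rule bdry_diff)
      also have "\<dots> = pr f g (bd orient) xs"
      proof (rule pr_cong)
        fix zs :: "'a list" assume zs: "length zs = Suc (length xs)" "set zs \<subseteq> f ` set xs \<union> g ` set xs"
        show "bdry L (k+1) (orient zs) = (bd orient zs :: 'a set \<Rightarrow> 'f)"
        proof (rule bdry_orient[OF L])
          show "length zs = Suc (k+1)" using zs xs by simp
          show "set zs \<in> L" if "distinct zs"
          proof (rule contig[OF \<sigma>(1)])
            show "set zs \<noteq> {}" using zs by auto
            show "set zs \<subseteq> f ` \<sigma> \<union> g ` \<sigma>" using zs xs by simp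
          qed
        qed
      qed
      finally show ?thesis .
    qed
    have h2: "hom V f g (bdry K k (orient xs)) = (bd (pr f g orient) xs :: 'a set \<Rightarrow> 'f)"
    proof -
      have "hom V f g (bdry K k (orient xs)) = hom V f g (bd orient xs :: 'b set \<Rightarrow> 'f)"
        by (subst bdry_orient[OF fK]) (use xs \<sigma> in auto)
      also have "\<dots> = bd (\<lambda>zs. hom V f g (orient zs)) xs"
        by (rule bd_additive[of "hom V f g"]) (rule hom_diff)
      also have "\<dots> = bd (pr f g orient) xs"
        unfolding bd_sum
      proof (rule sum.cong[OF refl])
        fix m assume "m \<in> {..<length xs}"
        have "set (dl m xs) \<subseteq> V" using set_dl[of m xs] xsV by (rule order_trans)
        thus "alt m (hom V f g (orient (dl m xs))) = alt m (pr f g orient (dl m xs) :: 'a set \<Rightarrow> 'f)"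
          by (simp only: hom_sorted[OF V sorted_dl[OF xs(3)] distinct_dl[OF xs(4)]])
      qed
      finally show ?thesis .
    qed
    have "xs \<noteq> []" using xs by auto
    hence "pr f g (bd orient) xs + bd (pr f g orient) xs = (orient (map g xs) - orient (map f xs) :: 'a set \<Rightarrow> 'f)"
      by (rule prism)
    also have "\<dots> = cmap V g (orient xs) - cmap V f (orient xs)"
      by (simp only: cmap_orient[OF V xsV])
    finally show "bdry L (k+1) (hom V f g (orient (sorted_list_of_set \<sigma>))) + hom V f g (bdry K k (orient (sorted_list_of_set \<sigma>)))
        = cmap V g (orient (sorted_list_of_set \<sigma>) :: 'b set \<Rightarrow> 'f) - cmap V f (orient (sorted_list_of_set \<sigma>))"
      using h1 h2 unfolding xs_def by simp
  qed
  also have "\<dots> = cmap V g c - cmap V f c"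
    by (subst (2 3) ce) (simp add: cmap_lc lc_diff)
  finally show ?thesis .
qed

lemma hom_chains:
  fixes f g :: "'b::linorder \<Rightarrow> 'a::linorder" and c :: "'b set \<Rightarrow> 'f::field"
  assumes V: "finite V" and K: "K \<subseteq> Pow V"
    and contig: "\<And>\<sigma> \<tau>. \<sigma> \<in> K \<Longrightarrow> \<tau> \<noteq> {} \<Longrightarrow> \<tau> \<subseteq> f ` \<sigma> \<union> g ` \<sigma> \<Longrightarrow> \<tau> \<in> L"
    and c: "c \<in> chains K k"
  shows "hom V f g c \<in> chains L (k+1)"
  unfolding chains_def
proof (intro CollectI allI impI)
  fix \<tau> assume ne: "hom V f g c \<tau> \<noteq> 0"
  have "hom V f g c \<tau> = (\<Sum>\<sigma>\<in>Pow V. pr f g orient (sorted_list_of_set \<sigma>) \<tau> * c \<sigma>)"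
    by (simp add: hom_def opr_def)
  hence "(\<Sum>\<sigma>\<in>Pow V. pr f g orient (sorted_list_of_set \<sigma>) \<tau> * c \<sigma>) \<noteq> 0" using ne by simp
  then obtain \<sigma> where \<sigma>: "\<sigma> \<in> Pow V" "pr f g orient (sorted_list_of_set \<sigma>) \<tau> * c \<sigma> \<noteq> 0"
    by (rule sum.not_neutral_contains_not_neutral)
  hence cs: "c \<sigma> \<noteq> 0" "pr f g orient (sorted_list_of_set \<sigma>) \<tau> \<noteq> (0::'f)" by auto
  hence sK: "\<sigma> \<in> K" "card \<sigma> = k + 1" "finite \<sigma>" using c by (auto simp: chains_def)
  have ss: "set (sorted_list_of_set \<sigma>) = \<sigma>" "length (sorted_list_of_set \<sigma>) = card \<sigma>" using sK(3) by simp_all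
  obtain zs where zs: "length zs = Suc (length (sorted_list_of_set \<sigma>))"
      "set zs \<subseteq> f ` set (sorted_list_of_set \<sigma>) \<union> g ` set (sorted_list_of_set \<sigma>)" "orient zs \<tau> \<noteq> (0::'f)"
    using pr_zero[of "sorted_list_of_set \<sigma>" f g orient \<tau>] cs(2) by blast
  have d: "distinct zs" "\<tau> = set zs" using zs(3) by (auto simp: orient_def split: if_splits)
  have "\<tau> \<in> L"
  proof (rule contig[OF sK(1)])
    show "\<tau> \<noteq> {}" using d zs(1) by auto
    show "\<tau> \<subseteq> f ` \<sigma> \<union> g ` \<sigma>" using d zs(2) ss by simp
  qed
  moreover have "card \<tau> = k + 1 + 1" using d zs(1) ss sK(2) by (simp add: distinct_card)
  ultimately show "\<tau> \<in> L \<and> finite \<tau> \<and> card \<tau> = k + 1 + 1" using d by simp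
qed

lemma hom_bdry0:
  fixes f g :: "'b::linorder \<Rightarrow> 'a::linorder" and c :: "'b set \<Rightarrow> 'f::field"
  shows "hom V f g (bdry K 0 c) = 0"
proof (rule ext)
  fix \<tau>
  have z: "pr f g orient (sorted_list_of_set \<sigma>) \<tau> * bdry K 0 c \<sigma> = (0::'f)" for \<sigma>
  proof (cases "bdry K 0 c \<sigma> = 0")
    case False
    hence "finite \<sigma> \<and> card \<sigma> = 0" by (auto simp: bdry_def split: if_splits)
    hence "\<sigma> = {}" by auto
    thus ?thesis by simp
  qed simp
  have s: "(\<Sum>\<sigma>\<in>Pow V. pr f g orient (sorted_list_of_set \<sigma>) \<tau> * bdry K 0 c \<sigma>) = (0::'f)"
    by (rule sum.neutral) (use z in blast)
  show "hom V f g (bdry K 0 c) \<tau> = (0 :: 'a set \<Rightarrow> 'f) \<tau>"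
    unfolding hom_def opr_def zero_fun_apply by (rule s)
qed

lemma vs_fscale: "vector_space (fscale :: 'f::field \<Rightarrow> ('a set \<Rightarrow> 'f) \<Rightarrow> ('a set \<Rightarrow> 'f))"
  by unfold_locales (simp_all add: fscale_def fun_eq_iff algebra_simps)

lemma vsp_fscale: "vector_space_pair (fscale :: 'f::field \<Rightarrow> ('a set \<Rightarrow> 'f) \<Rightarrow> ('a set \<Rightarrow> 'f))
   (fscale :: 'f::field \<Rightarrow> ('b set \<Rightarrow> 'f) \<Rightarrow> ('b set \<Rightarrow> 'f))"
  unfolding vector_space_pair_def by (simp add: vs_fscale)

context vector_space_pair begin

lemma rank_ineq:
  assumes G: "Vector_Spaces.linear s1 s2 G"
    and W: "W \<subseteq> vs1.span E" "finite E" and B'f: "B' \<subseteq> vs2.span E'" "finite E'"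
    and BW: "B \<subseteq> W" and GB: "G ` B \<subseteq> vs2.span B'" and V: "V \<subseteq> vs2.span (G ` W \<union> B')"
  shows "vs2.dim V + vs1.dim B \<le> vs1.dim W + vs2.dim B' \<and> vs1.dim B \<le> vs1.dim W"
proof -
  obtain Bb where Bb: "Bb \<subseteq> B" "vs1.independent Bb" "B \<subseteq> vs1.span Bb" "card Bb = vs1.dim B"
    by (rule vs1.basis_exists)
  obtain Wb where Wb: "Bb \<subseteq> Wb" "Wb \<subseteq> W" "vs1.independent Wb" "W \<subseteq> vs1.span Wb"
    using vs1.maximal_independent_subset_extend[of Bb W] Bb BW by blast
  have fWb: "finite Wb" using vs1.independent_span_bound[OF W(2) Wb(3)] Wb(2) W(1) by blast
  have cWb: "card Wb = vs1.dim W" by (rule vs1.basis_card_eq_dim[OF Wb(2) Wb(4) Wb(3)])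
  obtain Bb' where Bb': "Bb' \<subseteq> B'" "vs2.independent Bb'" "B' \<subseteq> vs2.span Bb'" "card Bb' = vs2.dim B'"
    by (rule vs2.basis_exists)
  have fBb': "finite Bb'" using vs2.independent_span_bound[OF B'f(2) Bb'(2)] Bb'(1) B'f(1) by blast
  define R where "R = Wb - Bb"
  have fR: "finite R" using fWb R_def by simp
  have mh: "module_hom s1 s2 G" using G by (simp add: Vector_Spaces.linear_def)
  let ?S = "vs2.span (G ` R \<union> Bb')"
  have sub: "vs2.subspace ?S" by (rule vs2.subspace_span)
  have B'S: "B' \<subseteq> ?S"
  proof -
    have "vs2.span Bb' \<subseteq> ?S" by (rule vs2.span_mono) blast
    thus ?thesis using Bb'(3) by blast
  qed
  have GWb: "G ` Wb \<subseteq> ?S"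
  proof
    fix y assume "y \<in> G ` Wb"
    then obtain w where w: "w \<in> Wb" "y = G w" by blast
    show "y \<in> ?S"
    proof (cases "w \<in> Bb")
      case True
      hence "y \<in> vs2.span B'" using w Bb(1) GB by blast
      moreover have "vs2.span B' \<subseteq> ?S" by (rule vs2.span_minimal[OF B'S sub])
      ultimately show ?thesis by blast
    next
      case False
      hence "y \<in> G ` R" using w R_def by blast
      thus ?thesis by (meson UnI1 vs2.span_base)
    qed
  qed
  have GW: "G ` W \<subseteq> ?S"
  proof -
    have "G ` W \<subseteq> G ` vs1.span Wb" using Wb(4) by blast
    also have "\<dots> = vs2.span (G ` Wb)" by (rule module_hom.span_image[OF mh, symmetric])
    also have "\<dots> \<subseteq> ?S" by (rule vs2.span_minimal[OF GWb sub])
    finally show ?thesis .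
  qed
  have "vs2.span (G ` W \<union> B') \<subseteq> ?S" by (rule vs2.span_minimal) (use GW B'S sub in auto)
  hence "V \<subseteq> ?S" using V by blast
  hence "vs2.dim V \<le> card (G ` R \<union> Bb')" by (rule vs2.dim_le_card) (use fR fBb' in simp)
  also have "\<dots> \<le> card (G ` R) + card Bb'" by (rule card_Un_le)
  also have "\<dots> \<le> card R + card Bb'" using card_image_le[OF fR] by simp
  finally have d1: "vs2.dim V \<le> card R + card Bb'" .
  have cR: "card R = card Wb - card Bb" unfolding R_def using Wb(1) fWb by (meson card_Diff_subset finite_subset)
  have le: "card Bb \<le> card Wb" using Wb(1) fWb by (rule card_mono[rotated])
  show ?thesis using d1 cR le Bb(4) cWb Bb'(4) by linarith
qed

end

lemma opr_add: "opr S w (x + y) = opr S w x + opr S w y"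
  unfolding opr_def by (rule ext) (simp add: distrib_left sum.distrib)
lemma opr_scale: "opr S w (fscale a x) = fscale a (opr S w x)"
  unfolding opr_def fscale_def by (rule ext) (simp add: sum_distrib_left mult.left_commute)

lemma linear_cmap: "Vector_Spaces.linear (fscale :: 'f::field \<Rightarrow> ('b::linorder set \<Rightarrow> 'f) \<Rightarrow> _) (fscale :: 'f \<Rightarrow> ('a::linorder set \<Rightarrow> 'f) \<Rightarrow> _) (cmap V g)"
  unfolding Vector_Spaces.linear_iff by (simp add: vs_fscale cmap_def opr_add opr_scale)

lemma in_span_chains:
  fixes c :: "'a::linorder set \<Rightarrow> 'f::field"
  assumes V: "finite V" and c: "\<And>\<sigma>. c \<sigma> \<noteq> 0 \<Longrightarrow> \<sigma> \<subseteq> V"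
  shows "c \<in> module.span fscale ((\<lambda>\<sigma>. orient (sorted_list_of_set \<sigma>)) ` Pow V)"
proof -
  interpret vs: vector_space "fscale :: 'f \<Rightarrow> ('a set \<Rightarrow> 'f) \<Rightarrow> _" by (rule vs_fscale)
  have ce: "c = lc (Pow V) c (\<lambda>\<sigma>. orient (sorted_list_of_set \<sigma>))"
    by (rule expand) (use c V in \<open>auto intro: finite_subset\<close>)
  have "lc (Pow V) c (\<lambda>\<sigma>. orient (sorted_list_of_set \<sigma>)) = (\<Sum>\<sigma>\<in>Pow V. fscale (c \<sigma>) (orient (sorted_list_of_set \<sigma>)))"
    unfolding lc_def fscale_def by (rule ext) (simp add: sum_fun_apply)
  also have "\<dots> \<in> vs.span ((\<lambda>\<sigma>. orient (sorted_list_of_set \<sigma>)) ` Pow V)"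
    by (intro vs.span_sum vs.span_scale vs.span_base) auto
  finally show ?thesis using ce by simp
qed

lemma chains_support: "c \<in> chains K j \<Longrightarrow> K \<subseteq> Pow V \<Longrightarrow> c \<sigma> \<noteq> 0 \<Longrightarrow> \<sigma> \<subseteq> V"
  by (auto simp: chains_def)

lemma bdry_support: "bdry L j c \<tau> \<noteq> 0 \<Longrightarrow> L \<subseteq> Pow V \<Longrightarrow> \<tau> \<subseteq> V"
proof -
  assume ne: "bdry L j c \<tau> \<noteq> 0" and L: "L \<subseteq> Pow V"
  have "{\<sigma> \<in> L. finite \<sigma> \<and> card \<sigma> = j + 1 \<and> \<tau> \<subset> \<sigma>} \<noteq> {}"
  proof
    assume "{\<sigma> \<in> L. finite \<sigma> \<and> card \<sigma> = j + 1 \<and> \<tau> \<subset> \<sigma>} = {}"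
    hence "bdry L j c \<tau> = 0" by (simp only: bdry_def sum.empty if_cancel)
    thus False using ne by simp
  qed
  thus ?thesis using L by auto
qed

lemma zero_chains: "0 \<in> chains K j" by (simp add: chains_def)

lemma zero_cycles: "(0 :: 'a::linorder set \<Rightarrow> 'f::field) \<in> cycles K j"
  by (simp add: cycles_def zero_chains bdry_zero)

lemma zero_boundaries: "(0 :: 'a::linorder set \<Rightarrow> 'f::field) \<in> boundaries L j"
  unfolding boundaries_def using zero_chains bdry_zero by fastforce

lemma rank_le:
  fixes X :: "'a::linorder set" and Y :: "'b::linorder set" and f :: "'b \<Rightarrow> 'a" and g :: "'a \<Rightarrow> 'b"
  assumes X: "finite X" and Y: "finite Y" and fY: "f ` Y \<subseteq> X" and gX: "g ` X \<subseteq> Y"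
    and KY: "KY \<subseteq> Pow Y" and LY: "LY \<subseteq> Pow Y" and KX: "KX \<subseteq> Pow X" and LX: "LX \<subseteq> Pow X"
    and fK: "\<And>\<sigma>. \<sigma> \<in> KY \<Longrightarrow> f ` \<sigma> \<in> KX" and gL: "\<And>\<sigma>. \<sigma> \<in> LX \<Longrightarrow> g ` \<sigma> \<in> LY" and KL: "KX \<subseteq> LX"
    and contig: "\<And>\<sigma> \<tau>. \<sigma> \<in> KY \<Longrightarrow> \<tau> \<noteq> {} \<Longrightarrow> \<tau> \<subseteq> (g \<circ> f) ` \<sigma> \<union> id ` \<sigma> \<Longrightarrow> \<tau> \<in> LY"
  shows "hom_rank TYPE('f::field) KY LY k \<le> hom_rank TYPE('f) KX LX k"
proof -
  interpret vsp: vector_space_pair "fscale :: 'f \<Rightarrow> ('a set \<Rightarrow> 'f) \<Rightarrow> _" "fscale :: 'f \<Rightarrow> ('b set \<Rightarrow> 'f) \<Rightarrow> _"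
    by (rule vsp_fscale)
  have fKX: "finite KX" using KX X by (meson finite_Pow_iff finite_subset)
  have fLX: "finite LX" using LX X by (meson finite_Pow_iff finite_subset)
  have fKY: "finite KY" using KY Y by (meson finite_Pow_iff finite_subset)
  have fLY: "finite LY" using LY Y by (meson finite_Pow_iff finite_subset)
  define W where "W = {z + b | z b. z \<in> (cycles KX k :: ('a set \<Rightarrow> 'f) set) \<and> b \<in> boundaries LX k}"
  define B where "B = (boundaries LX k :: ('a set \<Rightarrow> 'f) set)"
  define V where "V = {z + b | z b. z \<in> (cycles KY k :: ('b set \<Rightarrow> 'f) set) \<and> b \<in> boundaries LY k}"
  define B' where "B' = (boundaries LY k :: ('b set \<Rightarrow> 'f) set)"
  let ?G = "cmap X g :: ('a set \<Rightarrow> 'f) \<Rightarrow> ('b set \<Rightarrow> 'f)"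
  let ?F = "cmap Y f :: ('b set \<Rightarrow> 'f) \<Rightarrow> ('a set \<Rightarrow> 'f)"
  have bsupX: "b \<sigma> \<noteq> 0 \<Longrightarrow> \<sigma> \<subseteq> X" if "b \<in> (boundaries LX k :: ('a set \<Rightarrow> 'f) set)" for b \<sigma>
    using that LX by (auto simp: boundaries_def dest: bdry_support)
  have bsupY: "b \<sigma> \<noteq> 0 \<Longrightarrow> \<sigma> \<subseteq> Y" if "b \<in> (boundaries LY k :: ('b set \<Rightarrow> 'f) set)" for b \<sigma>
    using that LY by (auto simp: boundaries_def dest: bdry_support)
  have WE: "W \<subseteq> vsp.vs1.span ((\<lambda>\<sigma>. orient (sorted_list_of_set \<sigma>)) ` Pow X)"
  proof
    fix w assume "w \<in> W"
    then obtain z b where zb: "w = z + b" "z \<in> (cycles KX k :: ('a set \<Rightarrow> 'f) set)" "b \<in> boundaries LX k"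
      unfolding W_def by blast
    have zc: "z \<in> chains KX k" using zb(2) by (simp add: cycles_def)
    have "\<sigma> \<subseteq> X" if "w \<sigma> \<noteq> 0" for \<sigma>
    proof -
      have "z \<sigma> \<noteq> 0 \<or> b \<sigma> \<noteq> 0" using that zb(1) by auto
      thus ?thesis using bsupX[OF zb(3), of \<sigma>] chains_support[OF zc KX, of \<sigma>] by blast
    qed
    thus "w \<in> vsp.vs1.span ((\<lambda>\<sigma>. orient (sorted_list_of_set \<sigma>)) ` Pow X)"
      using in_span_chains[OF X] by blast
  qed
  have B'E: "B' \<subseteq> vsp.vs2.span ((\<lambda>\<sigma>. orient (sorted_list_of_set \<sigma>)) ` Pow Y)"
  proof
    fix w assume "w \<in> B'"
    thus "w \<in> vsp.vs2.span ((\<lambda>\<sigma>. orient (sorted_list_of_set \<sigma>)) ` Pow Y)"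
      using in_span_chains[OF Y] bsupY unfolding B'_def by blast
  qed
  have BW: "B \<subseteq> W"
  proof
    fix b assume "b \<in> B"
    hence "b = 0 + b \<and> (0 :: 'a set \<Rightarrow> 'f) \<in> cycles KX k \<and> b \<in> boundaries LX k"
      using zero_cycles unfolding B_def by simp
    thus "b \<in> W" unfolding W_def by blast
  qed
  have GB: "?G ` B \<subseteq> vsp.vs2.span B'"
  proof
    fix y assume "y \<in> ?G ` B"
    then obtain c where c: "c \<in> (chains LX (k+1) :: ('a set \<Rightarrow> 'f) set)" "y = ?G (bdry LX (k+1) c)"
      unfolding B_def boundaries_def by blast
    have "y = bdry LY (k+1) (?G c)"
      using c cmap_bdry[OF X LX fLY gL c(1)] by simp
    moreover have "?G c \<in> chains LY (k+1)" by (rule cmap_chains[OF X LX gL c(1)])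
    ultimately have "y \<in> B'" unfolding B'_def boundaries_def by blast
    thus "y \<in> vsp.vs2.span B'" by (rule vsp.vs2.span_base)
  qed
  have VS: "V \<subseteq> vsp.vs2.span (?G ` W \<union> B')"
  proof
    fix v assume "v \<in> V"
    then obtain z b where zb: "v = z + b" "z \<in> (cycles KY k :: ('b set \<Rightarrow> 'f) set)" "b \<in> boundaries LY k"
      unfolding V_def by blast
    have zc: "z \<in> chains KY k" using zb(2) by (simp add: cycles_def)
    have zsup: "\<And>\<sigma>. z \<sigma> \<noteq> 0 \<Longrightarrow> \<sigma> \<subseteq> Y" using chains_support[OF zc KY] by blast
    have Fz: "?F z \<in> cycles KX k"
    proof -
      have "?F z \<in> chains KX k" by (rule cmap_chains[OF Y KY fK zc])
      moreover have "k = 0 \<or> bdry KX k (?F z) = 0"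
      proof (cases "k = 0")
        case False
        hence "bdry KY k z = 0" using zb(2) by (simp add: cycles_def)
        moreover have "bdry KX k (?F z) = ?F (bdry KY k z)" by (rule cmap_bdry[OF Y KY fKX fK zc])
        ultimately show ?thesis by (simp add: cmap_def opr_zero)
      qed simp
      ultimately show ?thesis by (simp add: cycles_def)
    qed
    have FzW: "?F z \<in> W"
    proof -
      have "?F z = ?F z + 0" by simp
      thus ?thesis unfolding W_def using Fz zero_boundaries by blast
    qed
    have GFz: "?G (?F z) = cmap Y (g \<circ> f) z" by (rule cmap_comp[OF Y X fY zsup])
    have idz: "cmap Y id z = z" by (rule cmap_id[OF Y zsup])
    have ht: "bdry LY (k+1) (hom Y (g \<circ> f) id z) + hom Y (g \<circ> f) id (bdry KY k z) = cmap Y id z - cmap Y (g \<circ> f) z"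
      by (rule homotopy[OF Y KY fLY contig zc])
    have h0: "hom Y (g \<circ> f) id (bdry KY k z) = (0 :: 'b set \<Rightarrow> 'f)"
    proof (cases "k = 0")
      case True then show ?thesis using hom_bdry0 by simp
    next
      case False
      hence "bdry KY k z = 0" using zb(2) by (simp add: cycles_def)
      thus ?thesis by (simp add: hom_def opr_zero)
    qed
    have hc: "hom Y (g \<circ> f) id z \<in> chains LY (k+1)" by (rule hom_chains[OF Y KY contig zc])
    have dB: "z - ?G (?F z) \<in> B'"
    proof -
      have "z - ?G (?F z) = bdry LY (k+1) (hom Y (g \<circ> f) id z)" using ht h0 idz GFz by simp
      thus ?thesis unfolding B'_def boundaries_def using hc by blast
    qed
    have "v = ?G (?F z) + (z - ?G (?F z)) + b" using zb by simp
    moreover have "?G (?F z) \<in> vsp.vs2.span (?G ` W \<union> B')" using FzW by (intro vsp.vs2.span_base) blast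
    moreover have "z - ?G (?F z) \<in> vsp.vs2.span (?G ` W \<union> B')" using dB by (intro vsp.vs2.span_base) blast
    moreover have "b \<in> vsp.vs2.span (?G ` W \<union> B')" using zb(3) unfolding B'_def by (intro vsp.vs2.span_base) blast
    ultimately show "v \<in> vsp.vs2.span (?G ` W \<union> B')" by (metis vsp.vs2.span_add)
  qed
  have R: "vsp.vs2.dim V + vsp.vs1.dim B \<le> vsp.vs1.dim W + vsp.vs2.dim B' \<and> vsp.vs1.dim B \<le> vsp.vs1.dim W"
    by (rule vsp.rank_ineq[OF linear_cmap WE _ B'E _ BW GB VS]) (simp_all add: X Y)
  show ?thesis unfolding hom_rank_def using R unfolding V_def B'_def W_def B_def by linarith
qed

lemma DMS_facts:
  assumes "is_DMS X d"
  shows "finite X" "\<And>t x y. x \<in> X \<Longrightarrow> y \<in> X \<Longrightarrow> d t x y \<ge> 0"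
    "\<And>t x y. x \<in> X \<Longrightarrow> y \<in> X \<Longrightarrow> d t x y = d t y x"
    "\<And>x y. x \<in> X \<Longrightarrow> y \<in> X \<Longrightarrow> continuous_on UNIV (\<lambda>t. d t x y)"
  using assms unfolding is_DMS_def is_pseudometric_on_def by blast+

lemma vee_attained:
  assumes D: "is_DMS X d" and xy: "x \<in> X" "y \<in> X" and ab: "a \<le> b"
  obtains t where "t \<in> {a..b}" "vee d a b x y = d t x y"
proof -
  have "continuous_on {a..b} (\<lambda>t. d t x y)"
    using DMS_facts(4)[OF D xy] by (rule continuous_on_subset) simp
  then obtain t where t: "t \<in> {a..b}" "\<forall>s\<in>{a..b}. d t x y \<le> d s x y"
    using continuous_attains_inf[of "{a..b}" "\<lambda>t. d t x y"] ab by auto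
  have "vee d a b x y = d t x y"
    unfolding vee_def by (rule cInf_eq_minimum) (use t in auto)
  thus ?thesis using t that by blast
qed

lemma vee_le:
  assumes D: "is_DMS X d" and xy: "x \<in> X" "y \<in> X" and t: "t \<in> {a..b}"
  shows "vee d a b x y \<le> d t x y"
  unfolding vee_def
proof (rule cInf_lower)
  show "d t x y \<in> (\<lambda>s. d s x y) ` {a..b}" using t by blast
  show "bdd_below ((\<lambda>s. d s x y) ` {a..b})"
    using DMS_facts(2)[OF D xy] by (intro bdd_belowI[of _ 0]) auto
qed

lemma vee_mono:
  assumes D: "is_DMS X d" and xy: "x \<in> X" "y \<in> X" and ab: "a \<le> b" and "a' \<le> a" "b \<le> b'"
  shows "vee d a' b' x y \<le> vee d a b x y"
proof -
  obtain t where t: "t \<in> {a..b}" "vee d a b x y = d t x y" using vee_attained[OF D xy ab] .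
  have "t \<in> {a'..b'}" using t assms by auto
  thus ?thesis using vee_le[OF D xy] t by simp
qed

lemma vee_sym:
  assumes D: "is_DMS X d" and xy: "x \<in> X" "y \<in> X"
  shows "vee d a b x y = vee d a b y x"
  unfolding vee_def using DMS_facts(3)[OF D xy] by simp

lemma tripod_sym: "eps_tripod X dX Y dY Z phiX phiY e \<Longrightarrow> eps_tripod Y dY X dX Z phiY phiX e"
  unfolding eps_tripod_def by blast

lemma rips_mem: "\<sigma> \<in> rips X d \<delta> \<longleftrightarrow> \<sigma> \<noteq> {} \<and> \<sigma> \<subseteq> X \<and> (\<forall>x\<in>\<sigma>. \<forall>x'\<in>\<sigma>. d x x' \<le> \<delta>)"
  by (simp add: rips_def)

lemma geo_rank:
  fixes X :: "'a::linorder set" and Y :: "'b::linorder set" and Z :: "'z set"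
    and dX :: "real \<Rightarrow> 'a \<Rightarrow> 'a \<Rightarrow> real" and dY :: "real \<Rightarrow> 'b \<Rightarrow> 'b \<Rightarrow> real"
  assumes DX: "is_DMS X dX" and DY: "is_DMS Y dY" and T: "eps_tripod X dX Y dY Z phiX phiY e" and e: "e \<ge> 0"
    and a: "admissible a" and a2: "admissible (shift6 a (2*e))"
  shows "hom_rank TYPE('f::field)
            (rips Y (vee dY (c1 (shift6 a (2*e))) (c2 (shift6 a (2*e)))) (c3 (shift6 a (2*e))))
            (rips Y (vee dY (c4 (shift6 a (2*e))) (c5 (shift6 a (2*e)))) (c6 (shift6 a (2*e)))) k
       \<le> hom_rank TYPE('f) (rips X (vee dX (c1 a) (c2 a)) (c3 a)) (rips X (vee dX (c4 a) (c5 a)) (c6 a)) k"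
proof -
  have TX: "phiX ` Z = X" and TY: "phiY ` Z = Y"
    and T12: "\<And>t z z'. z \<in> Z \<Longrightarrow> z' \<in> Z \<Longrightarrow>
        vee dX (t - e) (t + e) (phiX z) (phiX z') \<le> dY t (phiY z) (phiY z') + 2 * e \<and>
        vee dY (t - e) (t + e) (phiY z) (phiY z') \<le> dX t (phiX z) (phiX z') + 2 * e"
    using T unfolding eps_tripod_def by blast+
  define sY where "sY y = (SOME z. z \<in> Z \<and> phiY z = y)" for y
  define sX where "sX x = (SOME z. z \<in> Z \<and> phiX z = x)" for x
  have sY: "sY y \<in> Z \<and> phiY (sY y) = y" if "y \<in> Y" for y
    unfolding sY_def by (rule someI_ex) (use that TY in blast)
  have sX: "sX x \<in> Z \<and> phiX (sX x) = x" if "x \<in> X" for x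
    unfolding sX_def by (rule someI_ex) (use that TX in blast)
  define f where "f y = phiX (sY y)" for y
  define g where "g x = phiY (sX x)" for x
  have fY: "f ` Y \<subseteq> X" using sY TX unfolding f_def by blast
  have gX: "g ` X \<subseteq> Y" using sX TY unfolding g_def by blast
  have T1: "vee dX (t - e) (t + e) (f y) (f y') \<le> dY t y y' + 2 * e" if "y \<in> Y" "y' \<in> Y" for t y y'
    using T12[of "sY y" "sY y'" t] sY[OF that(1)] sY[OF that(2)] unfolding f_def by auto
  have T2: "vee dY (t - e) (t + e) (g x) (g x') \<le> dX t x x' + 2 * e" if "x \<in> X" "x' \<in> X" for t x x'
    using T12[of "sX x" "sX x'" t] sX[OF that(1)] sX[OF that(2)] unfolding g_def by auto
  have T3: "vee dY (t - e) (t + e) y (g x) \<le> dX t (f y) x + 2 * e" if "y \<in> Y" "x \<in> X" for t y x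
    using T12[of "sY y" "sX x" t] sY[OF that(1)] sX[OF that(2)] unfolding f_def g_def by auto
  have H1: "vee dX (lo - e) (hi + e) (f y) (f y') \<le> \<delta> + 2 * e"
    if "y \<in> Y" "y' \<in> Y" "lo \<le> hi" "vee dY lo hi y y' \<le> \<delta>" for y y' lo hi \<delta>
  proof -
    note prems = that
    obtain t where t: "t \<in> {lo..hi}" "vee dY lo hi y y' = dY t y y'" using vee_attained[OF DY prems(1,2,3)] .
    have "vee dX (lo - e) (hi + e) (f y) (f y') \<le> vee dX (t - e) (t + e) (f y) (f y')"
      by (rule vee_mono[OF DX]) (use fY prems t e in auto)
    also have "\<dots> \<le> dY t y y' + 2 * e" by (rule T1[OF prems(1,2)])
    finally show ?thesis using t prems by simp
  qed
  have H2: "vee dY (lo - e) (hi + e) (g x) (g x') \<le> \<delta> + 2 * e"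
    if "x \<in> X" "x' \<in> X" "lo \<le> hi" "vee dX lo hi x x' \<le> \<delta>" for x x' lo hi \<delta>
  proof -
    note prems = that
    obtain t where t: "t \<in> {lo..hi}" "vee dX lo hi x x' = dX t x x'" using vee_attained[OF DX prems(1,2,3)] .
    have "vee dY (lo - e) (hi + e) (g x) (g x') \<le> vee dY (t - e) (t + e) (g x) (g x')"
      by (rule vee_mono[OF DY]) (use gX prems t e in auto)
    also have "\<dots> \<le> dX t x x' + 2 * e" by (rule T2[OF prems(1,2)])
    finally show ?thesis using t prems by simp
  qed
  have H3: "vee dY (lo - e) (hi + e) y (g x) \<le> \<delta> + 2 * e"
    if "y \<in> Y" "x \<in> X" "lo \<le> hi" "vee dX lo hi (f y) x \<le> \<delta>" for y x lo hi \<delta>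
  proof -
    note prems = that
    have fy: "f y \<in> X" using fY prems by blast
    obtain t where t: "t \<in> {lo..hi}" "vee dX lo hi (f y) x = dX t (f y) x" using vee_attained[OF DX fy prems(2,3)] .
    have "vee dY (lo - e) (hi + e) y (g x) \<le> vee dY (t - e) (t + e) y (g x)"
      by (rule vee_mono[OF DY]) (use gX prems t e in auto)
    also have "\<dots> \<le> dX t (f y) x + 2 * e" by (rule T3[OF prems(1,2)])
    finally show ?thesis using t prems by simp
  qed
  define p1 where "p1 = c1 a"
  define p2 where "p2 = c2 a"
  define p3 where "p3 = c3 a"
  define p4 where "p4 = c4 a"
  define p5 where "p5 = c5 a"
  define p6 where "p6 = c6 a"
  have sh: "c1 (shift6 a (2*e)) = p1 + 2*e" "c2 (shift6 a (2*e)) = p2 - 2*e" "c3 (shift6 a (2*e)) = p3 - 2*e"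
    "c4 (shift6 a (2*e)) = p4 - 2*e" "c5 (shift6 a (2*e)) = p5 + 2*e" "c6 (shift6 a (2*e)) = p6 + 2*e"
    by (simp_all add: shift6_def p1_def p2_def p3_def p4_def p5_def p6_def)
  have ad: "p1 \<le> p2" "p4 \<le> p1" "p2 \<le> p5" "0 \<le> p3" "p3 \<le> p6"
    using a unfolding admissible_def p1_def p2_def p3_def p4_def p5_def p6_def by auto
  have ad2: "p1 + 2*e \<le> p2 - 2*e" "0 \<le> p3 - 2*e"
    using a2 unfolding admissible_def sh[symmetric] by auto
  define KY where "KY = rips Y (vee dY (p1 + 2*e) (p2 - 2*e)) (p3 - 2*e)"
  define LY where "LY = rips Y (vee dY (p4 - 2*e) (p5 + 2*e)) (p6 + 2*e)"
  define KX where "KX = rips X (vee dX p1 p2) p3"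
  define LX where "LX = rips X (vee dX p4 p5) p6"
  have finX: "finite X" using DMS_facts(1)[OF DX] .
  have finY: "finite Y" using DMS_facts(1)[OF DY] .
  have fK: "f ` \<sigma> \<in> KX" if "\<sigma> \<in> KY" for \<sigma>
  proof -
    have s: "\<sigma> \<noteq> {}" "\<sigma> \<subseteq> Y" "\<forall>y\<in>\<sigma>. \<forall>y'\<in>\<sigma>. vee dY (p1 + 2*e) (p2 - 2*e) y y' \<le> p3 - 2*e"
      using that unfolding KY_def rips_mem by blast+
    have "vee dX p1 p2 (f y) (f y') \<le> p3" if "y \<in> \<sigma>" "y' \<in> \<sigma>" for y y'
    proof -
      have yy: "y \<in> Y" "y' \<in> Y" using s that by auto
      have "vee dX (p1 + 2*e - e) (p2 - 2*e + e) (f y) (f y') \<le> p3 - 2*e + 2*e"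
        by (rule H1) (use yy ad2 s that in auto)
      moreover have "vee dX p1 p2 (f y) (f y') \<le> vee dX (p1 + 2*e - e) (p2 - 2*e + e) (f y) (f y')"
        by (rule vee_mono[OF DX]) (use yy fY ad2 e in auto)
      ultimately show ?thesis by simp
    qed
    thus ?thesis unfolding KX_def rips_mem using s fY by blast
  qed
  have gL: "g ` \<sigma> \<in> LY" if "\<sigma> \<in> LX" for \<sigma>
  proof -
    have s: "\<sigma> \<noteq> {}" "\<sigma> \<subseteq> X" "\<forall>x\<in>\<sigma>. \<forall>x'\<in>\<sigma>. vee dX p4 p5 x x' \<le> p6"
      using that unfolding LX_def rips_mem by blast+
    have "vee dY (p4 - 2*e) (p5 + 2*e) (g x) (g x') \<le> p6 + 2*e" if "x \<in> \<sigma>" "x' \<in> \<sigma>" for x x'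
    proof -
      have xx: "x \<in> X" "x' \<in> X" using s that by auto
      have "vee dY (p4 - e) (p5 + e) (g x) (g x') \<le> p6 + 2*e"
        by (rule H2) (use xx ad s that in auto)
      moreover have "vee dY (p4 - 2*e) (p5 + 2*e) (g x) (g x') \<le> vee dY (p4 - e) (p5 + e) (g x) (g x')"
        by (rule vee_mono[OF DY]) (use xx gX ad e in auto)
      ultimately show ?thesis by simp
    qed
    thus ?thesis unfolding LY_def rips_mem using s gX by blast
  qed
  have KL: "KX \<subseteq> LX"
  proof
    fix \<sigma> assume "\<sigma> \<in> KX"
    hence s: "\<sigma> \<noteq> {}" "\<sigma> \<subseteq> X" "\<forall>x\<in>\<sigma>. \<forall>x'\<in>\<sigma>. vee dX p1 p2 x x' \<le> p3"
      unfolding KX_def rips_mem by blast+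
    have "vee dX p4 p5 x x' \<le> p6" if "x \<in> \<sigma>" "x' \<in> \<sigma>" for x x'
    proof -
      have xx: "x \<in> X" "x' \<in> X" using s that by auto
      have "vee dX p4 p5 x x' \<le> vee dX p1 p2 x x'" by (rule vee_mono[OF DX xx]) (use ad in auto)
      thus ?thesis using s that ad by force
    qed
    thus "\<sigma> \<in> LX" unfolding LX_def rips_mem using s by blast
  qed
  have contig: "\<tau> \<in> LY" if "\<sigma> \<in> KY" "\<tau> \<noteq> {}" "\<tau> \<subseteq> (g \<circ> f) ` \<sigma> \<union> id ` \<sigma>" for \<sigma> \<tau>
  proof -
    have s: "\<sigma> \<noteq> {}" "\<sigma> \<subseteq> Y" "\<forall>y\<in>\<sigma>. \<forall>y'\<in>\<sigma>. vee dY (p1 + 2*e) (p2 - 2*e) y y' \<le> p3 - 2*e"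
      using that(1) unfolding KY_def rips_mem by blast+
    have gfs: "g ` f ` \<sigma> \<in> LY" using gL KL fK that(1) by blast
    hence gfs': "\<forall>u\<in>g ` f ` \<sigma>. \<forall>u'\<in>g ` f ` \<sigma>. vee dY (p4 - 2*e) (p5 + 2*e) u u' \<le> p6 + 2*e"
      unfolding LY_def rips_mem by blast
    have gfY: "g (f y) \<in> Y" if "y \<in> Y" for y using fY gX that by blast
    have sub: "\<tau> \<subseteq> Y" using that(3) s(2) gfY by auto
    have mixed: "vee dY (p4 - 2*e) (p5 + 2*e) y (g (f y')) \<le> p6 + 2*e" if "y \<in> \<sigma>" "y' \<in> \<sigma>" for y y'
    proof -
      have yy: "y \<in> Y" "y' \<in> Y" using s that by auto
      have fy': "f y' \<in> X" using fY yy by blast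
      have v1: "vee dX (p1 + 2*e - e) (p2 - 2*e + e) (f y) (f y') \<le> p3 - 2*e + 2*e"
        by (rule H1) (use yy ad2 s that in auto)
      have "vee dY (p1 + 2*e - e - e) (p2 - 2*e + e + e) y (g (f y')) \<le> p3 - 2*e + 2*e + 2*e"
        by (rule H3[OF yy(1) fy']) (use v1 ad2 e in auto)
      moreover have "vee dY (p4 - 2*e) (p5 + 2*e) y (g (f y')) \<le> vee dY (p1 + 2*e - e - e) (p2 - 2*e + e + e) y (g (f y'))"
        by (rule vee_mono[OF DY]) (use yy fy' gX ad e in auto)
      ultimately show ?thesis using ad by simp
    qed
    have "vee dY (p4 - 2*e) (p5 + 2*e) u u' \<le> p6 + 2*e" if "u \<in> \<tau>" "u' \<in> \<tau>" for u u'
    proof -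
      note uu = that
      have u1: "u \<in> \<sigma> \<or> (\<exists>y\<in>\<sigma>. u = g (f y))" using uu(1) \<open>\<tau> \<subseteq> (g \<circ> f) ` \<sigma> \<union> id ` \<sigma>\<close> by auto
      have u2: "u' \<in> \<sigma> \<or> (\<exists>y\<in>\<sigma>. u' = g (f y))" using uu(2) \<open>\<tau> \<subseteq> (g \<circ> f) ` \<sigma> \<union> id ` \<sigma>\<close> by auto
      consider (a) y y' where "y \<in> \<sigma>" "y' \<in> \<sigma>" "u = y" "u' = y'"
        | (b) y y' where "y \<in> \<sigma>" "y' \<in> \<sigma>" "u = y" "u' = g (f y')"
        | (c) y y' where "y \<in> \<sigma>" "y' \<in> \<sigma>" "u = g (f y)" "u' = y'"
        | (d) y y' where "y \<in> \<sigma>" "y' \<in> \<sigma>" "u = g (f y)" "u' = g (f y')"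
        using u1 u2 by blast
      then show ?thesis
      proof cases
        case a
        have yy: "y \<in> Y" "y' \<in> Y" using s a by auto
        have "vee dY (p4 - 2*e) (p5 + 2*e) y y' \<le> vee dY (p1 + 2*e) (p2 - 2*e) y y'"
          by (rule vee_mono[OF DY yy]) (use ad ad2 e in auto)
        thus ?thesis using s a ad e by force
      next
        case b then show ?thesis using mixed by simp
      next
        case c
        have yy: "y' \<in> Y" "g (f y) \<in> Y" using s(2) c(1,2) gfY by auto
        show ?thesis using mixed[OF c(2) c(1)] vee_sym[OF DY yy] c by simp
      next
        case d then show ?thesis using gfs' by blast
      qed
    qed
    thus ?thesis unfolding LY_def rips_mem using that(2) sub by blast
  qed
  have "hom_rank TYPE('f) KY LY k \<le> hom_rank TYPE('f) KX LX k"
  proof (rule rank_le[OF finX finY fY gX _ _ _ _ fK gL KL contig])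
    show "KY \<subseteq> Pow Y" "LY \<subseteq> Pow Y" "KX \<subseteq> Pow X" "LX \<subseteq> Pow X"
      unfolding KY_def LY_def KX_def LX_def rips_def by auto
  qed
  thus ?thesis unfolding KY_def LY_def KX_def LX_def sh p1_def p2_def p3_def p4_def p5_def p6_def .
qed

lemma le6_shift: "e \<ge> 0 \<Longrightarrow> le6 a (shift6 a e)"
  by (simp add: le6_def shift6_def)

lemma le6_trans: "le6 a b \<Longrightarrow> le6 b c \<Longrightarrow> le6 a c"
  by (simp add: le6_def)

lemma shift6_0: "shift6 a 0 = a"
  by (cases a) (simp add: shift6_def)

lemma one_dir:
  fixes X :: "'a::linorder set" and Y :: "'b::linorder set" and Z :: "'z set"
    and dX :: "real \<Rightarrow> 'a \<Rightarrow> 'a \<Rightarrow> real" and dY :: "real \<Rightarrow> 'b \<Rightarrow> 'b \<Rightarrow> real"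
  assumes DX: "is_DMS X dX" and DY: "is_DMS Y dY" and T: "eps_tripod X dX Y dY Z phiX phiY e" and e: "e \<ge> 0"
  shows "rk TYPE('f::field) k Y dY (shift6 a (2*e)) \<le> rk TYPE('f) k X dX a"
proof (cases "admissible a")
  case True
  show ?thesis
  proof (cases "admissible (shift6 a (2*e))")
    case True2: True
    show ?thesis unfolding rk_def using True True2 geo_rank[OF DX DY T e True True2, of k] by simp
  next
    case False
    have "a \<noteq> shift6 a (2*e)" using True False by metis
    moreover have "le6 a (shift6 a (2*e))" using e by (simp add: le6_shift)
    ultimately have "\<not> triv_nonadmissible (shift6 a (2*e))" using True unfolding triv_nonadmissible_def by blast
    thus ?thesis unfolding rk_def using False by simp
  qed
next
  case False
  show ?thesis
  proof (cases "triv_nonadmissible a")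
    case True then show ?thesis unfolding rk_def using False by simp
  next
    case nt: False
    then obtain b where b: "admissible b" "le6 b a" "b \<noteq> a" unfolding triv_nonadmissible_def by blast
    have key: "c2 a < c1 a \<or> c3 a < 0"
    proof (rule ccontr)
      assume "\<not> (c2 a < c1 a \<or> c3 a < 0)"
      hence "admissible a" using b(1,2) unfolding admissible_def le6_def atLeastatMost_subset_iff by auto
      thus False using False by simp
    qed
    have na: "\<not> admissible (shift6 a (2*e))"
      using key e unfolding admissible_def shift6_def by auto
    have "le6 b (shift6 a (2*e))" using le6_trans[OF b(2) le6_shift] e by simp
    moreover have "b \<noteq> shift6 a (2*e)"
    proof
      assume eq: "b = shift6 a (2*e)"
      hence "c1 a + 2*e \<le> c1 a" using b(2) by (simp add: le6_def shift6_def)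
      hence "e = 0" using e by simp
      hence "b = a" using eq by (simp add: shift6_0)
      thus False using b(3) by simp
    qed
    ultimately have "\<not> triv_nonadmissible (shift6 a (2*e))" using b(1) unfolding triv_nonadmissible_def by blast
    thus ?thesis unfolding rk_def using na by simp
  qed
qed

theorem theorem4p4:
  fixes X :: "'a::linorder set" and dX :: "real \<Rightarrow> 'a \<Rightarrow> 'a \<Rightarrow> real"
    and Y :: "'b::linorder set" and dY :: "real \<Rightarrow> 'b \<Rightarrow> 'b \<Rightarrow> real"
    and k :: nat
  assumes "is_DMS X dX" and "is_DMS Y dY"
  shows "interleaving_dist (rk TYPE('f::field) k X dX) (rk TYPE('f) k Y dY)
           \<le> 2 * d_dyn X dX Y dY"
proof -
  let ?F = "rk TYPE('f::field) k X dX"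
  let ?G = "rk TYPE('f) k Y dY"
  define S1 where "S1 = {ereal \<epsilon> | \<epsilon>. \<epsilon> \<ge> 0 \<and> (\<forall>a. ?F a \<ge> ?G (shift6 a \<epsilon>) \<and> ?G a \<ge> ?F (shift6 a \<epsilon>))}"
  define S2 where "S2 = {ereal \<epsilon> | \<epsilon> (Z :: ('a \<times> 'b) set) phiX phiY. \<epsilon> \<ge> 0 \<and> eps_tripod X dX Y dY Z phiX phiY \<epsilon>}"
  have sub: "{ereal 2 * x |x. x \<in> S2} \<subseteq> S1"
  proof
    fix y assume "y \<in> {ereal 2 * x |x. x \<in> S2}"
    then obtain e Z phiX phiY where y: "y = ereal (2 * e)" "e \<ge> 0"
      and T: "eps_tripod X dX Y dY (Z :: ('a \<times> 'b) set) phiX phiY e"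
      unfolding S2_def by auto
    have "?F a \<ge> ?G (shift6 a (2*e)) \<and> ?G a \<ge> ?F (shift6 a (2*e))" for a
      using one_dir[OF assms(1,2) T y(2)] one_dir[OF assms(2,1) tripod_sym[OF T] y(2)] by blast
    thus "y \<in> S1" unfolding S1_def using y by auto
  qed
  have "interleaving_dist ?F ?G = Inf S1" unfolding interleaving_dist_def S1_def ..
  also have "\<dots> \<le> Inf {ereal 2 * x |x. x \<in> S2}" by (rule Inf_superset_mono[OF sub])
  also have "\<dots> = ereal 2 * Inf {x. x \<in> S2}" by (rule ereal_Inf_cmult) simp
  also have "\<dots> = 2 * d_dyn X dX Y dY" unfolding d_dyn_def S2_def by simp
  finally show ?thesis .
qed


end
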